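(* Let $H:\Sigma\to\mathbb R$ be continuous with summable variation. \begin{enumerate} \item For every $x\in\mathrm{Mather}(H)$, the function $h(x,\cdot)$ belongs to $\mathbb K$ and is a calibrated sub-action. \item If $V\in C^0(\Sigma)$ is a calibrated sub-action, then $V\in\mathbb K$ and $V(y)=\min\{V(x)+h(x,y): x\in\mathrm{Mather}(H)\}$ for all $y\in\Sigma$. \end{enumerate}
   Context: $\Sigma:=\{0,1\}^{\mathbb N}$, $\sigma$ the left shift; $x\stackrel{n}{=}y$ means $x_j=y_j$ for $0\le j\le n-1$; $\mathrm{var}(f,n):=\sup\{|f(x)-f(y)|:x\stackrel{n}{=}y\}$; summable variation: $\sum_n\mathrm{var}(H,n)<\infty$. $\mathbb K:=\{V\in C^0(\Sigma):\forall n\ge1,\ \mathrm{var}(V,n)\le\sum_{k\ge n+1}\mathrm{var}(H,k)\}$. A minimizing measure is a $\sigma$-invariant probability minimizing $\int H\,d\nu$ over $\sigma$-invariant probabilities; $\bar H$ is the minimal value; $\mathrm{Mather}(H)$ is the union of supports of minimizing measures. Lax–Oleinik operator $T[V](y):=\min\{V(x)+H(x):\sigma(x)=y\}$; calibrated sub-action: continuous $V$ with $T[V]=V+\bar H$. Peierls barrier: $h(x,y):=\lim_{p\to\infty}\lim_{n\to\infty}S_n^p(x,y)$, $S_n^p(x,y):=\inf\{\sum_{i=0}^{k-1}[H(\sigma^iz)-\bar H]:k\ge n,\ z\stackrel{p}{=}x,\ \sigma^k(z)\stackrel{p}{=}y\}$. *)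

theory Defs
  imports "HOL-Probability.Probability"
begin

text \<open>The full one-sided shift on two symbols: Sigma = {0,1}^N is represented by the type
  nat \<Rightarrow> bool with the product topology (bool carries the discrete topology),
  i.e. the usual compact metrizable Cantor topology.\<close>

type_synonym sigma = "nat \<Rightarrow> bool"

definition shift :: "sigma \<Rightarrow> sigma" where
  "shift x = (\<lambda>j. x (Suc j))"

definition agree :: "nat \<Rightarrow> sigma \<Rightarrow> sigma \<Rightarrow> bool" where
  "agree n x y \<longleftrightarrow> (\<forall>j<n. x j = y j)"

definition var :: "(sigma \<Rightarrow> real) \<Rightarrow> nat \<Rightarrow> real" where
  "var f n = (SUP (x, y) \<in> {(x, y). agree n x y}. \<bar>f x - f y\<bar>)"

definition summable_variation :: "(sigma \<Rightarrow> real) \<Rightarrow> bool" where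
  "summable_variation H \<longleftrightarrow> summable (\<lambda>n. var H n)"

definition classK :: "(sigma \<Rightarrow> real) \<Rightarrow> (sigma \<Rightarrow> real) set" where
  "classK H = {V. continuous_on UNIV V \<and>
      (\<forall>n\<ge>1. var V n \<le> (\<Sum>k. var H (k + n + 1)))}"

definition invariant_prob :: "sigma measure \<Rightarrow> bool" where
  "invariant_prob M \<longleftrightarrow> prob_space M \<and> sets M = sets (borel :: sigma measure) \<and>
      shift \<in> M \<rightarrow>\<^sub>M M \<and> distr M M shift = M"

definition Hbar :: "(sigma \<Rightarrow> real) \<Rightarrow> real" where
  "Hbar H = (INF M \<in> {M. invariant_prob M}. integral\<^sup>L M H)"

definition minimizing :: "(sigma \<Rightarrow> real) \<Rightarrow> sigma measure \<Rightarrow> bool" where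
  "minimizing H M \<longleftrightarrow> invariant_prob M \<and>
      (\<forall>N. invariant_prob N \<longrightarrow> integral\<^sup>L M H \<le> integral\<^sup>L N H)"

definition support :: "sigma measure \<Rightarrow> sigma set" where
  "support M = {x. \<forall>U. open U \<and> x \<in> U \<longrightarrow> emeasure M U > 0}"

definition Mather :: "(sigma \<Rightarrow> real) \<Rightarrow> sigma set" where
  "Mather H = (\<Union>M \<in> {M. minimizing H M}. support M)"

definition LaxOleinik :: "(sigma \<Rightarrow> real) \<Rightarrow> (sigma \<Rightarrow> real) \<Rightarrow> sigma \<Rightarrow> real" where
  "LaxOleinik H V y = Min {V x + H x | x. shift x = y}"

definition calibrated_subaction :: "(sigma \<Rightarrow> real) \<Rightarrow> (sigma \<Rightarrow> real) \<Rightarrow> bool" where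
  "calibrated_subaction H V \<longleftrightarrow> continuous_on UNIV V \<and>
      (\<forall>y. LaxOleinik H V y = V y + Hbar H)"

definition S_np :: "(sigma \<Rightarrow> real) \<Rightarrow> nat \<Rightarrow> nat \<Rightarrow> sigma \<Rightarrow> sigma \<Rightarrow> real" where
  "S_np H n p x y = Inf {(\<Sum>i<k. H ((shift ^^ i) z) - Hbar H) | k z.
      k \<ge> n \<and> agree p z x \<and> agree p ((shift ^^ k) z) y}"

definition peierls :: "(sigma \<Rightarrow> real) \<Rightarrow> sigma \<Rightarrow> sigma \<Rightarrow> real" where
  "peierls H x y = lim (\<lambda>p. lim (\<lambda>n. S_np H n p x y))"

end

theory Submission
  imports Defs
begin


lemma funpow_shift: "(shift ^^ i) z = (\<lambda>j. z (j + i))"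
  by (induction i arbitrary: z) (auto simp: shift_def)

lemma funpow_shift_app: "(shift ^^ i) z j = z (j + i)"
  by (simp add: funpow_shift)

lemma agree_mono: "agree n x y \<Longrightarrow> m \<le> n \<Longrightarrow> agree m x y"
  by (auto simp: agree_def)

lemma agree_sym: "agree n x y \<Longrightarrow> agree n y x"
  by (auto simp: agree_def)

lemma agree_trans: "agree n x y \<Longrightarrow> agree n y z \<Longrightarrow> agree n x z"
  by (auto simp: agree_def)

lemma agree_refl[simp]: "agree n x x"
  by (auto simp: agree_def)

lemma agree_0[simp]: "agree 0 x y"
  by (auto simp: agree_def)

lemma agree_shiftn: "agree (k + m) z z' \<Longrightarrow> i \<le> k \<Longrightarrow> agree (k - i + m) ((shift^^i) z) ((shift^^i) z')"
  by (auto simp: agree_def funpow_shift)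

definition splice :: "nat \<Rightarrow> sigma \<Rightarrow> sigma \<Rightarrow> sigma" where
  "splice k z y = (\<lambda>j. if j < k then z j else y (j - k))"

lemma shift_splice[simp]: "(shift ^^ k) (splice k z y) = y"
  by (auto simp: funpow_shift splice_def)

lemma agree_splice: "p \<le> k \<Longrightarrow> agree p (splice k z y) z"
  by (auto simp: agree_def splice_def)

lemma agree_splice2: "agree m y y' \<Longrightarrow> agree (k + m) (splice k z y) (splice k z y')"
  by (auto simp: agree_def splice_def)

lemma agree_splice3: "agree m ((shift^^k) z) y \<Longrightarrow> agree (k + m) z (splice k z y)"
  unfolding agree_def splice_def funpow_shift
proof (intro allI impI)
  fix j assume a: "\<forall>j<m. z (j + k) = y j" and j: "j < k + m"
  show "z j = (if j < k then z j else y (j - k))"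
  proof (cases "j < k")
    case False
    then have "j - k < m" "j - k + k = j" using j by auto
    then show ?thesis using a False by metis
  qed auto
qed

lemma cyl_eq: "{z::sigma. agree n z x} = Pi\<^sub>E UNIV (\<lambda>j. if j < n then {x j} else UNIV)"
  by (auto simp: agree_def PiE_UNIV_domain Pi_def split: if_splits)

lemma cyl_open: "open {z::sigma. agree n z x}"
  unfolding cyl_eq
proof (rule open_PiE)
  show "open (if j < n then {x j} else UNIV)" for j
    using discrete_topology_class.open_discrete[of "{x j}"] by simp
  show "finite {i. (if i < n then {x i} else UNIV) \<noteq> UNIV}"
    by (rule finite_subset[of _ "{..<n}"]) auto
qed

lemma cyl_basis:
  assumes "open (U::sigma set)" "x \<in> U"
  shows "\<exists>n. \<forall>z. agree n z x \<longrightarrow> z \<in> U"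
proof -
  obtain X where X: "x \<in> (\<Pi>\<^sub>E i\<in>UNIV. X i)" "finite {i. X i \<noteq> topspace (euclidean::bool topology)}"
     "(\<Pi>\<^sub>E i\<in>UNIV. X i) \<subseteq> U"
    using product_topology_open_contains_basis[of "\<lambda>i. euclidean" UNIV U x] assms
    unfolding open_fun_def by blast
  obtain n where n: "{i. X i \<noteq> UNIV} \<subseteq> {..<n}"
    using X(2) finite_nat_bounded by auto
  have "z \<in> U" if "agree n z x" for z
  proof -
    have zi: "z i \<in> X i" for i
      proof (cases "X i = UNIV")
        case False
        then have "i < n" using n by auto
        then show ?thesis using that X(1) by (auto simp: agree_def PiE_UNIV_domain)
      next
        case True then show ?thesis by auto
      qed
    have "z \<in> (\<Pi>\<^sub>E i\<in>UNIV. X i)" using zi by (simp add: PiE_UNIV_domain)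
    then show ?thesis using X(3) by auto
  qed
  then show ?thesis by auto
qed

lemma compact_sigma: "compact (UNIV :: sigma set)"
proof -
  have "compact_space (product_topology (\<lambda>i::nat. euclidean::bool topology) UNIV)"
    unfolding compact_space_product_topology
    by (auto simp: compact_space_def finite_imp_compact)
  then show ?thesis
    by (simp add: euclidean_product_topology compact_space_def)
qed

lemma cont_shift: "continuous_on UNIV shift"
  unfolding shift_def by (intro continuous_intros continuous_on_product_coordinates)

lemma cont_funpow_shift: "continuous_on UNIV (shift ^^ i)"
  by (induction i) (auto simp: continuous_on_id intro: continuous_on_compose2[OF cont_shift])


lemma cont_open_vimage: "continuous_on UNIV (f::sigma \<Rightarrow> 'b::topological_space) \<Longrightarrow> open S \<Longrightarrow> open (f -` S)"
  using continuous_on_open_vimage[of UNIV f] by auto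

lemma unif_cont:
  fixes f :: "sigma \<Rightarrow> real"
  assumes f: "continuous_on UNIV f" and e: "e > 0"
  shows "\<exists>N. \<forall>n x y. N \<le> n \<longrightarrow> agree n x y \<longrightarrow> \<bar>f x - f y\<bar> < e"
proof -
  have "\<forall>x. \<exists>n. \<forall>z. agree n z x \<longrightarrow> \<bar>f z - f x\<bar> < e/2"
  proof
    fix x
    have op1: "open (f -` ball (f x) (e/2))" by (rule cont_open_vimage[OF f]) auto
    have xi: "x \<in> f -` ball (f x) (e/2)" using e by auto
    obtain n where "\<forall>z. agree n z x \<longrightarrow> z \<in> f -` ball (f x) (e/2)"
      using cyl_basis[OF op1 xi] by blast
    then show "\<exists>n. \<forall>z. agree n z x \<longrightarrow> \<bar>f z - f x\<bar> < e/2" by (metis (no_types, lifting) abs_minus_commute dist_real_def mem_ball vimage_eq)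
  qed
  then obtain nx where nx: "\<forall>x z. agree (nx x) z x \<longrightarrow> \<bar>f z - f x\<bar> < e/2" 
    by (rule choice[THEN exE]) blast
  have cov: "UNIV \<subseteq> (\<Union>c\<in>UNIV. {z. agree (nx c) z c})" by auto
  have "\<exists>C. finite C \<and> UNIV \<subseteq> (\<Union>c\<in>C. {z. agree (nx c) z c})"
    apply (rule compactE_image[OF compact_sigma, where f="\<lambda>c. {z. agree (nx c) z c}" and C=UNIV])
    apply (rule cyl_open)
    apply (rule cov)
    apply blast
    done
  then obtain C where C: "finite C" "UNIV \<subseteq> (\<Union>c\<in>C. {z. agree (nx c) z c})" by blast
  obtain N where N: "nx ` C \<subseteq> {..<N}" using C(1) finite_nat_bounded by blast
  have "\<bar>f x - f y\<bar> < e" if "N \<le> n" "agree n x y" for n x y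
  proof -
    obtain c where c: "c \<in> C" "agree (nx c) x c" using C(2) by blast
    have "nx c \<le> n" using N c that by auto
    then have "agree (nx c) y x" using that agree_mono agree_sym by blast
    then have "agree (nx c) y c" using c agree_trans by blast
    then have "\<bar>f y - f c\<bar> < e/2" using nx by blast
    moreover have "\<bar>f x - f c\<bar> < e/2" using nx c by blast
    ultimately show ?thesis by linarith
  qed
  then show ?thesis by blast
qed
lemma cont_bounded:
  fixes f :: "sigma \<Rightarrow> real"
  assumes "continuous_on UNIV f"
  shows "\<exists>B. \<forall>x. \<bar>f x\<bar> \<le> B"
proof -
  have "compact (f ` UNIV)" using compact_continuous_image[OF assms compact_sigma] .
  then have "bounded (f ` UNIV)" by (rule compact_imp_bounded)
  then show ?thesis unfolding bounded_iff by auto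
qed

lemma var_ge:
  assumes "\<And>x. \<bar>f x\<bar> \<le> B" "agree n x y"
  shows "\<bar>f x - f y\<bar> \<le> var f n"
  unfolding var_def
proof (rule cSUP_upper2[where x="(x,y)"])
  show "bdd_above ((\<lambda>(x, y). \<bar>f x - f y\<bar>) ` {(x, y). agree n x y})"
  proof (rule bdd_aboveI[where M="2*B"])
    fix t assume "t \<in> (\<lambda>(x, y). \<bar>f x - f y\<bar>) ` {(x, y). agree n x y}"
    then obtain a b where "t = \<bar>f a - f b\<bar>" by auto
    then show "t \<le> 2*B" using assms(1)[of a] assms(1)[of b] by linarith
  qed
qed (use assms in auto)

lemma var_le:
  assumes "\<And>x y. agree n x y \<Longrightarrow> \<bar>f x - f y\<bar> \<le> e"
  shows "var f n \<le> e"
  unfolding var_def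
  apply (rule cSUP_least)
  using agree_refl apply blast
  using assms by auto

lemma var_nonneg:
  assumes "\<And>x. \<bar>f x\<bar> \<le> B"
  shows "0 \<le> var f n"
  using var_ge[OF assms, of n undefined undefined] by simp

lemma var_cont_ge:
  assumes "continuous_on UNIV f" "agree n x y"
  shows "\<bar>f x - f y\<bar> \<le> var f n"
  using cont_bounded[OF assms(1)] var_ge assms(2) by blast

lemma var_tendsto:
  assumes "continuous_on UNIV f"
  shows "(\<lambda>n. var f n) \<longlonglongrightarrow> 0"
proof (rule LIMSEQ_I)
  fix r :: real assume r: "0 < r"
  obtain N where N: "\<And>n x y. N \<le> n \<Longrightarrow> agree n x y \<Longrightarrow> \<bar>f x - f y\<bar> < r/2"
    using unif_cont[OF assms, of "r/2"] r by auto
  obtain B where B: "\<And>x. \<bar>f x\<bar> \<le> B" using cont_bounded[OF assms] by auto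
  have "norm (var f n - 0) < r" if "N \<le> n" for n
  proof -
    have "var f n \<le> r/2" by (rule var_le) (use N that in force)
    moreover have "0 \<le> var f n" using var_nonneg[OF B] .
    ultimately show ?thesis using r by simp
  qed
  then show "\<exists>no. \<forall>n\<ge>no. norm (var f n - 0) < r" by blast
qed

lemma cont_from_var:
  fixes f :: "sigma \<Rightarrow> real"
  assumes "\<And>n x y. agree n x y \<Longrightarrow> \<bar>f x - f y\<bar> \<le> e n" "e \<longlonglongrightarrow> 0"
  shows "continuous_on UNIV f"
proof (subst continuous_on_topological, intro ballI allI impI)
    fix x :: sigma
    fix S :: "real set" assume S: "open S" "f x \<in> S"
    then obtain r where r: "r > 0" "ball (f x) r \<subseteq> S" using open_contains_ball by blast
    obtain n where n: "\<bar>e n\<bar> < r" using LIMSEQ_D[OF assms(2) r(1)] by auto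
    have "\<forall>y\<in>UNIV. y \<in> {z. agree n z x} \<longrightarrow> f y \<in> S"
    proof (intro ballI impI)
      fix y assume "y \<in> {z. agree n z x}"
      then have "\<bar>f y - f x\<bar> < r" using assms(1)[of n y x] n by auto
      then show "f y \<in> S" using r(2) by (auto simp: dist_real_def)
    qed
    then show "\<exists>A. open A \<and> x \<in> A \<and> (\<forall>y\<in>UNIV. y \<in> A \<longrightarrow> f y \<in> S)"
      using cyl_open[of n x] by (intro exI[of _ "{z. agree n z x}"]) auto
qed


definition Tt :: "(sigma \<Rightarrow> real) \<Rightarrow> nat \<Rightarrow> real" where
  "Tt H m = (\<Sum>j. var H (j + m + 1))"

definition Ssum :: "(sigma \<Rightarrow> real) \<Rightarrow> nat \<Rightarrow> sigma \<Rightarrow> real" where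
  "Ssum H k z = (\<Sum>i<k. H ((shift ^^ i) z) - Hbar H)"

lemma meas_cont: "sets M = sets borel \<Longrightarrow> continuous_on UNIV (f::sigma \<Rightarrow> 'b::topological_space) \<Longrightarrow> f \<in> borel_measurable M"
  using measurable_cong_sets[of M borel borel borel] borel_measurable_continuous_onI[of f] by auto

lemma integrable_cont:
  assumes "finite_measure M" "sets M = sets borel" "continuous_on UNIV (f::sigma\<Rightarrow>real)"
  shows "integrable M f"
proof -
  obtain B where "\<forall>x. \<bar>f x\<bar> \<le> B" using cont_bounded[OF assms(3)] by auto
  then show ?thesis using finite_measure.integrable_const_bound[OF assms(1), of f B] meas_cont[OF assms(2,3)]
    by auto
qed

lemma Ssum_Suc: "Ssum H (Suc k) z = Ssum H k z + H ((shift ^^ k) z) - Hbar H"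
  by (simp add: Ssum_def)

lemma Ssum_eq: "Ssum H k z = (\<Sum>i<k. H ((shift ^^ i) z)) - real k * Hbar H"
  by (simp add: Ssum_def sum_subtractf)

context
  fixes H :: "sigma \<Rightarrow> real"
  assumes Hc: "continuous_on UNIV H" and sv: "summable_variation H"
begin

lemma HB: "\<exists>B. \<forall>x. \<bar>H x\<bar> \<le> B" using cont_bounded[OF Hc] .

lemma varH_nonneg: "0 \<le> var H n" using HB var_nonneg by blast

lemma summ: "summable (var H)" using sv unfolding summable_variation_def by simp

lemma summ_shift: "summable (\<lambda>j. var H (j + m + 1))"
  using summable_iff_shift[of "var H" "m+1"] summ by (simp add: add.assoc)

lemma T_nonneg: "0 \<le> Tt H m"
  unfolding Tt_def by (rule suminf_nonneg[OF summ_shift]) (rule varH_nonneg)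

lemma T_partial: "(\<Sum>j<k. var H (j + m + 1)) \<le> Tt H m"
  unfolding Tt_def by (rule sum_le_suminf[OF summ_shift]) (auto intro: varH_nonneg)

lemma T_tendsto: "Tt H \<longlonglongrightarrow> 0"
proof -
  have eq: "Tt H m = suminf (var H) - (\<Sum>i<Suc m. var H i)" for m
    using suminf_split_initial_segment[OF summ, of "m+1"] by (simp add: Tt_def add.assoc)
  have "(\<lambda>n. \<Sum>i<n. var H i) \<longlonglongrightarrow> suminf (var H)" using summable_LIMSEQ[OF summ] .
  then have "(\<lambda>m. \<Sum>i<Suc m. var H i) \<longlonglongrightarrow> suminf (var H)" by (rule LIMSEQ_Suc)
  then have "(\<lambda>m. suminf (var H) - (\<Sum>i<Suc m. var H i)) \<longlonglongrightarrow> suminf (var H) - suminf (var H)"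
    by (intro tendsto_intros)
  then show ?thesis by (simp add: eq[abs_def])
qed

lemma varH_tendsto: "(\<lambda>n. var H n) \<longlonglongrightarrow> 0"
  using var_tendsto[OF Hc] .

lemma DL:
  assumes "agree (k + m) z z'"
  shows "\<bar>(\<Sum>i<k. H ((shift^^i) z)) - (\<Sum>i<k. H ((shift^^i) z'))\<bar> \<le> Tt H m"
proof -
  have "\<bar>(\<Sum>i<k. H ((shift^^i) z)) - (\<Sum>i<k. H ((shift^^i) z'))\<bar>
      = \<bar>\<Sum>i<k. H ((shift^^i) z) - H ((shift^^i) z')\<bar>" by (simp add: sum_subtractf)
  also have "\<dots> \<le> (\<Sum>i<k. \<bar>H ((shift^^i) z) - H ((shift^^i) z')\<bar>)" by (rule sum_abs)
  also have "\<dots> \<le> (\<Sum>i<k. var H (k - Suc i + m + 1))"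
  proof (rule sum_mono)
    fix i assume "i \<in> {..<k}"
    then have "k - i + m = k - Suc i + m + 1" by auto
    moreover have "agree (k - i + m) ((shift^^i) z) ((shift^^i) z')"
      using agree_shiftn[OF assms] \<open>i \<in> {..<k}\<close> by auto
    ultimately show "\<bar>H ((shift^^i) z) - H ((shift^^i) z')\<bar> \<le> var H (k - Suc i + m + 1)"
      using var_cont_ge[OF Hc] by metis
  qed
  also have "\<dots> = (\<Sum>j<k. var H (j + m + 1))"
    using sum.nat_diff_reindex[of "\<lambda>j. var H (j + m + 1)" k] by simp
  also have "\<dots> \<le> Tt H m" by (rule T_partial)
  finally show ?thesis .
qed

lemma DL_S:
  assumes "agree (k + m) z z'"
  shows "\<bar>Ssum H k z - Ssum H k z'\<bar> \<le> Tt H m"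
  using DL[OF assms] by (simp add: Ssum_eq)

lemma inv_integrable: "invariant_prob M \<Longrightarrow> integrable M H"
  unfolding invariant_prob_def
  using integrable_cont[of M H] Hc prob_space.axioms(1) by blast

lemma bdd_ints: "bdd_below ((\<lambda>M. integral\<^sup>L M H) ` {M. invariant_prob M})"
proof -
  obtain B where B: "\<forall>x. \<bar>H x\<bar> \<le> B" using HB by auto
  have "- B \<le> integral\<^sup>L N H" if "invariant_prob N" for N
  proof -
    interpret prob_space N using that unfolding invariant_prob_def by auto
    show ?thesis
    proof (rule integral_ge_const)
      show "integrable N H" using inv_integrable[OF that] .
      have "\<forall>x. - B \<le> H x" using B by (metis abs_le_iff minus_le_iff)
      then show "AE x in N. - B \<le> H x" by (intro AE_I2) auto
    qed
  qed
  then show ?thesis by (intro bdd_belowI[where m="-B"]) auto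
qed

lemma Hbar_le: "invariant_prob M \<Longrightarrow> Hbar H \<le> integral\<^sup>L M H"
  unfolding Hbar_def by (rule cINF_lower[OF bdd_ints]) auto

lemma minimizing_eq: "minimizing H M \<Longrightarrow> integral\<^sup>L M H = Hbar H"
  unfolding minimizing_def Hbar_def
  by (intro antisym cINF_greatest cINF_lower[OF bdd_ints]) auto

end


definition permeas :: "nat \<Rightarrow> sigma \<Rightarrow> sigma measure" where
  "permeas k z = distr (measure_pmf (pmf_of_set {..<k})) borel (\<lambda>i. (shift^^i) (\<lambda>j. z (j mod k)))"

lemma permeas_inv:
  assumes "k > 0"
  shows "invariant_prob (permeas k z)"
proof -
  define w where "w = (\<lambda>j. z (j mod k))"
  define g where "g = (\<lambda>i. (shift^^i) w)"
  define P where "P = measure_pmf (pmf_of_set {..<k})"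
  have fin: "{..<k} \<noteq> {}" "finite {..<k}" using assms by auto
  have pe: "permeas k z = distr P borel g" unfolding permeas_def P_def g_def w_def by simp
  have gm: "g \<in> measurable P borel" by (simp add: P_def)
  have sets: "sets (permeas k z) = sets borel" by (simp add: pe)
  have ps: "prob_space (permeas k z)" unfolding pe
    by (rule prob_space.prob_space_distr[OF _ gm]) (simp add: P_def prob_space_measure_pmf)
  have smb: "shift \<in> borel \<rightarrow>\<^sub>M borel" by (rule borel_measurable_continuous_onI[OF cont_shift])
  have sm: "shift \<in> permeas k z \<rightarrow>\<^sub>M permeas k z"
    using smb measurable_cong_sets[OF sets sets] by simp
  define rot where "rot i = Suc i mod k" for i
  have inj: "inj_on rot {..<k}"
  proof (rule inj_onI)
    fix a b assume "a \<in> {..<k}" "b \<in> {..<k}" "rot a = rot b"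
    moreover have "rot i = (if Suc i = k then 0 else Suc i)" if "i < k" for i
      using that by (auto simp: rot_def)
    ultimately show "a = b" by (auto split: if_splits)
  qed
  have rotim: "rot ` {..<k} = {..<k}"
    using inj by (intro endo_inj_surj) (auto simp: rot_def assms)
  have comm: "shift \<circ> g = g \<circ> rot"
  proof
    fix i
    have "(shift \<circ> g) i = (\<lambda>j. z ((j + Suc i) mod k))"
      by (simp add: g_def w_def funpow_shift shift_def)
    also have "\<dots> = (\<lambda>j. z ((j + Suc i mod k) mod k))" by (simp add: mod_add_right_eq)
    also have "\<dots> = (g \<circ> rot) i" by (simp add: g_def w_def funpow_shift rot_def)
    finally show "(shift \<circ> g) i = (g \<circ> rot) i" .
  qed
  have "distr (permeas k z) (permeas k z) shift = distr P (permeas k z) (shift \<circ> g)"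
    unfolding pe by (rule distr_distr[OF _ gm]) (use sm pe in simp)
  also have "\<dots> = distr P borel (g \<circ> rot)"
    by (rule distr_cong) (auto simp: sets comm)
  also have "\<dots> = distr (distr P (count_space UNIV) rot) borel g"
    by (rule distr_distr[symmetric]) (auto simp: P_def)
  also have "distr P (count_space UNIV) rot = P"
    unfolding P_def map_pmf_rep_eq[symmetric] using map_pmf_of_set_inj[OF inj fin] rotim by simp
  finally have "distr (permeas k z) (permeas k z) shift = permeas k z" by (simp add: pe)
  then show ?thesis unfolding invariant_prob_def using ps sets sm by auto
qed

lemma permeas_int:
  assumes "k > 0" "continuous_on UNIV (f::sigma \<Rightarrow> real)"
  shows "integral\<^sup>L (permeas k z) f = (\<Sum>i<k. f ((shift^^i) (\<lambda>j. z (j mod k)))) / real k"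
proof -
  have fin: "{..<k} \<noteq> {}" "finite {..<k}" using assms by auto
  show ?thesis unfolding permeas_def
    by (subst integral_distr) (auto simp: integral_pmf_of_set[OF fin] borel_measurable_continuous_onI[OF assms(2)])
qed

definition uu :: "(sigma \<Rightarrow> real) \<Rightarrow> sigma \<Rightarrow> real" where
  "uu H y = Inf {Ssum H k z | k z. (shift^^k) z = y}"

context
  fixes H :: "sigma \<Rightarrow> real"
  assumes Hc: "continuous_on UNIV H" and sv: "summable_variation H"
begin

lemma S_lower: "- Tt H 0 \<le> Ssum H k z"
proof (cases "k = 0")
  case True then show ?thesis using T_nonneg[OF Hc sv] by (simp add: Ssum_def)
next
  case False
  then have k: "k > 0" by auto
  define w where "w = (\<lambda>j. z (j mod k))"
  have "agree (k + 0) w z" by (auto simp: agree_def w_def)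
  then have d: "\<bar>(\<Sum>i<k. H ((shift^^i) w)) - (\<Sum>i<k. H ((shift^^i) z))\<bar> \<le> Tt H 0"
    by (rule DL[OF Hc sv])
  have "Hbar H \<le> integral\<^sup>L (permeas k z) H" by (rule Hbar_le[OF Hc sv permeas_inv[OF k]])
  also have "\<dots> = (\<Sum>i<k. H ((shift^^i) w)) / real k" unfolding w_def by (rule permeas_int[OF k Hc])
  finally have "real k * Hbar H \<le> (\<Sum>i<k. H ((shift^^i) w))" using k by (simp add: field_simps)
  then show ?thesis using d by (simp add: Ssum_eq)
qed

lemma uset_ne: "Ssum H 0 y \<in> {Ssum H k z | k z. (shift^^k) z = y}"
  by (rule CollectI, rule exI[of _ 0], rule exI[of _ y]) simp

lemma uset_bdd: "bdd_below {Ssum H k z | k z. (shift^^k) z = y}"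
  using S_lower by (intro bdd_belowI[where m="- Tt H 0"]) auto

lemma u_upper: "uu H y \<le> 0"
  unfolding uu_def using cInf_lower[OF uset_ne uset_bdd] by (simp add: Ssum_def)

lemma u_lower: "- Tt H 0 \<le> uu H y"
  unfolding uu_def
  apply (rule cInf_greatest)
  using uset_ne apply blast
  using S_lower by auto

lemma u_sub: "uu H (shift x) \<le> uu H x + H x - Hbar H"
proof -
  have "uu H (shift x) - (H x - Hbar H) \<le> uu H x"
    unfolding uu_def
  proof (rule cInf_greatest)
    show "{Ssum H k z | k z. (shift^^k) z = x} \<noteq> {}" using uset_ne by blast
    fix v assume "v \<in> {Ssum H k z | k z. (shift^^k) z = x}"
    then obtain k z where v: "v = Ssum H k z" "(shift^^k) z = x" by auto
    have "(shift^^Suc k) z = shift x" using v by simp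
    then have "Ssum H (Suc k) z \<in> {Ssum H k z | k z. (shift^^k) z = shift x}" by blast
    then have "Inf {Ssum H k z | k z. (shift^^k) z = shift x} \<le> Ssum H (Suc k) z"
      by (rule cInf_lower[OF _ uset_bdd])
    then show "Inf {Ssum H k z | k z. (shift^^k) z = shift x} - (H x - Hbar H) \<le> v"
      using v by (simp add: Ssum_Suc)
  qed
  then show ?thesis by simp
qed

lemma u_var:
  assumes "agree m y y'"
  shows "uu H y' \<le> uu H y + Tt H m"
proof -
  have "uu H y' - Tt H m \<le> uu H y"
    unfolding uu_def
  proof (rule cInf_greatest)
    show "{Ssum H k z | k z. (shift^^k) z = y} \<noteq> {}" using uset_ne by blast
    fix v assume "v \<in> {Ssum H k z | k z. (shift^^k) z = y}"
    then obtain k z where v: "v = Ssum H k z" "(shift^^k) z = y" by auto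
    define z' where "z' = splice k z y'"
    have "agree (k + m) z z'" unfolding z'_def by (rule agree_splice3) (use v assms in simp)
    then have d: "\<bar>Ssum H k z - Ssum H k z'\<bar> \<le> Tt H m" by (rule DL_S[OF Hc sv])
    have "Ssum H k z' \<in> {Ssum H k z | k z. (shift^^k) z = y'}"
      by (rule CollectI, rule exI[of _ k], rule exI[of _ z']) (simp add: z'_def)
    then have "Inf {Ssum H k z | k z. (shift^^k) z = y'} \<le> Ssum H k z'"
      by (rule cInf_lower[OF _ uset_bdd])
    then show "Inf {Ssum H k z | k z. (shift^^k) z = y'} - Tt H m \<le> v"
      using v d by linarith
  qed
  then show ?thesis by simp
qed

lemma u_cont: "continuous_on UNIV (uu H)"
proof (rule cont_from_var[where e="Tt H"])
  show "\<bar>uu H x - uu H y\<bar> \<le> Tt H n" if "agree n x y" for n x y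
    using u_var[OF that] u_var[OF agree_sym[OF that]] by linarith
  show "Tt H \<longlonglongrightarrow> 0" by (rule T_tendsto[OF Hc sv])
qed

end


definition RR :: "(sigma \<Rightarrow> real) \<Rightarrow> sigma \<Rightarrow> real" where
  "RR H x = H x - Hbar H + uu H x - uu H (shift x)"

definition EE :: "(sigma \<Rightarrow> real) \<Rightarrow> nat \<Rightarrow> nat \<Rightarrow> sigma \<Rightarrow> sigma \<Rightarrow> real set" where
  "EE H n p x y = {Ssum H k z | k z. n \<le> k \<and> agree p z x \<and> agree p ((shift ^^ k) z) y}"

lemma S_np_EE: "S_np H n p x y = Inf (EE H n p x y)"
  by (simp add: S_np_def EE_def Ssum_def)

definition LL :: "(sigma \<Rightarrow> real) \<Rightarrow> nat \<Rightarrow> sigma \<Rightarrow> sigma \<Rightarrow> real" where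
  "LL H p x y = lim (\<lambda>n. S_np H n p x y)"

lemma peierls_LL: "peierls H x y = lim (\<lambda>p. LL H p x y)"
  by (simp add: peierls_def LL_def)

definition good :: "(sigma \<Rightarrow> real) \<Rightarrow> sigma \<Rightarrow> bool" where
  "good H x \<longleftrightarrow> (\<forall>m. Ssum H m x \<le> Tt H 0)"

lemma measure_space_UNIV: "sets M = sets (borel::sigma measure) \<Longrightarrow> space M = UNIV"
  using sets_eq_imp_space_eq[of M borel] by simp

context
  fixes H :: "sigma \<Rightarrow> real"
  assumes Hc: "continuous_on UNIV H" and sv: "summable_variation H"
begin

lemma R_nonneg: "0 \<le> RR H x"
  using u_sub[OF Hc sv, of x] by (simp add: RR_def)

lemma R_cont: "continuous_on UNIV (RR H)"
  unfolding RR_def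
  by (intro continuous_intros Hc u_cont[OF Hc sv] continuous_on_compose2[OF u_cont[OF Hc sv] cont_shift]) auto

lemma R_int_zero:
  assumes "minimizing H M"
  shows "integral\<^sup>L M (RR H) = 0"
proof -
  have ip: "invariant_prob M" using assms by (simp add: minimizing_def)
  then have ps: "prob_space M" and sets: "sets M = sets borel" and sm: "shift \<in> M \<rightarrow>\<^sub>M M"
    and inv: "distr M M shift = M" by (auto simp: invariant_prob_def)
  have fm: "finite_measure M" using ps prob_space.axioms(1) by blast
  have ucont: "continuous_on UNIV (uu H)" by (rule u_cont[OF Hc sv])
  have usc: "continuous_on UNIV (\<lambda>x. uu H (shift x))"
    by (rule continuous_on_compose2[OF ucont cont_shift]) auto
  have iH: "integrable M H" by (rule integrable_cont[OF fm sets Hc])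
  have iu: "integrable M (uu H)" by (rule integrable_cont[OF fm sets ucont])
  have ius: "integrable M (\<lambda>x. uu H (shift x))" by (rule integrable_cont[OF fm sets usc])
  have ic: "integrable M (\<lambda>x. Hbar H)" using fm by (simp add: finite_measure.integrable_const)
  have "integral\<^sup>L M (\<lambda>x. uu H (shift x)) = integral\<^sup>L (distr M M shift) (uu H)"
    by (rule integral_distr[symmetric, OF sm]) (rule meas_cont[OF sets ucont])
  then have eq: "integral\<^sup>L M (\<lambda>x. uu H (shift x)) = integral\<^sup>L M (uu H)" using inv by simp
  have "integral\<^sup>L M (RR H) = integral\<^sup>L M H - integral\<^sup>L M (\<lambda>x. Hbar H) + integral\<^sup>L M (uu H)
      - integral\<^sup>L M (\<lambda>x. uu H (shift x))"
    unfolding RR_def using iH iu ius ic by simp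
  also have "\<dots> = 0" using eq minimizing_eq[OF Hc sv assms] prob_space.prob_space[OF ps] by simp
  finally show ?thesis .
qed

lemma R_zero_supp:
  assumes "minimizing H M" "x \<in> support M"
  shows "RR H x = 0"
proof (rule ccontr)
  assume "RR H x \<noteq> 0"
  then have pos: "RR H x > 0" using R_nonneg[of x] by auto
  have ip: "invariant_prob M" using assms by (simp add: minimizing_def)
  then have ps: "prob_space M" and sets: "sets M = sets borel"
    by (auto simp: invariant_prob_def)
  have fm: "finite_measure M" using ps prob_space.axioms(1) by blast
  define U where "U = RR H -` {RR H x / 2 <..}"
  have oU: "open U" unfolding U_def by (rule cont_open_vimage[OF R_cont]) auto
  have xU: "x \<in> U" using pos by (simp add: U_def)
  have "emeasure M U > 0" using assms(2) oU xU by (auto simp: support_def)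
  then have mpos: "measure M U > 0"
    using finite_measure.emeasure_eq_measure[OF fm, of U] by simp
  have Us: "U \<in> sets M" using oU sets by simp
  have iR: "integrable M (RR H)" by (rule integrable_cont[OF fm sets R_cont])
  have iI: "integrable M (\<lambda>z. RR H x / 2 * indicator U z)"
    using Us finite_measure.emeasure_finite[OF fm, of U] by (intro integrable_mult_right) (simp add: top.not_eq_extremum)
  have "integral\<^sup>L M (\<lambda>z. RR H x / 2 * indicator U z) \<le> integral\<^sup>L M (RR H)"
  proof (rule integral_mono[OF iI iR])
    fix z show "RR H x / 2 * indicator U z \<le> RR H z"
      using R_nonneg[of z] by (auto simp: U_def indicator_def)
  qed
  moreover have "integral\<^sup>L M (\<lambda>z. RR H x / 2 * indicator U z) = RR H x / 2 * measure M U"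
  proof -
    have sp: "space M = UNIV" using measure_space_UNIV[OF sets] .
    show ?thesis by (simp add: sp)
  qed
  moreover have "RR H x / 2 * measure M U > 0" using pos mpos by simp
  ultimately show False using R_int_zero[OF assms(1)] by linarith
qed

lemma supp_shift:
  assumes "invariant_prob M" "x \<in> support M"
  shows "shift x \<in> support M"
  unfolding support_def
proof (intro CollectI allI impI)
  fix U assume U: "open U \<and> shift x \<in> U"
  have sets: "sets M = sets borel" and sm: "shift \<in> M \<rightarrow>\<^sub>M M" and inv: "distr M M shift = M"
    using assms(1) by (auto simp: invariant_prob_def)
  have oV: "open (shift -` U)" by (rule cont_open_vimage[OF cont_shift]) (use U in auto)
  then have "emeasure M (shift -` U) > 0" using assms(2) U by (auto simp: support_def)
  moreover have "emeasure M (shift -` U) = emeasure M U"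
  proof -
    have "U \<in> sets M" using U sets by simp
    then have "emeasure (distr M M shift) U = emeasure M (shift -` U \<inter> space M)"
      by (rule emeasure_distr[OF sm])
    then show ?thesis using inv measure_space_UNIV[OF sets] by simp
  qed
  ultimately show "emeasure M U > 0" by simp
qed

lemma supp_shift_iter:
  assumes "invariant_prob M" "x \<in> support M"
  shows "(shift^^i) x \<in> support M"
  by (induction i) (auto intro: supp_shift[OF assms(1)] assms(2))

lemma Ssum_tele:
  assumes "\<And>i. RR H ((shift^^i) x) = 0"
  shows "Ssum H m x = uu H ((shift^^m) x) - uu H x"
proof (induction m)
  case 0 then show ?case by (simp add: Ssum_def)
next
  case (Suc m)
  have "RR H ((shift^^m) x) = 0" by (rule assms)
  then show ?case using Suc by (simp add: Ssum_Suc RR_def)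
qed

lemma Mather_good:
  assumes "x \<in> Mather H"
  shows "good H x"
proof -
  obtain M where M: "minimizing H M" "x \<in> support M" using assms by (auto simp: Mather_def)
  have ip: "invariant_prob M" using M by (simp add: minimizing_def)
  have "RR H ((shift^^i) x) = 0" for i
    by (rule R_zero_supp[OF M(1) supp_shift_iter[OF ip M(2)]])
  then have "Ssum H m x = uu H ((shift^^m) x) - uu H x" for m by (rule Ssum_tele)
  then show ?thesis unfolding good_def
  proof (intro allI)
    fix m
    show "Ssum H m x \<le> Tt H 0"
      using u_upper[OF Hc sv, of "(shift^^m) x"] u_lower[OF Hc sv, of x] \<open>Ssum H m x = uu H ((shift^^m) x) - uu H x\<close>
      by linarith
  qed
qed

end


lemma agree_shift1: "agree (Suc p) a b \<Longrightarrow> agree p (shift a) (shift b)"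
  by (auto simp: agree_def shift_def)

definition pre :: "bool \<Rightarrow> sigma \<Rightarrow> sigma" where
  "pre b y = (\<lambda>j. case j of 0 \<Rightarrow> b | Suc i \<Rightarrow> y i)"

lemma shift_pre[simp]: "shift (pre b y) = y"
  by (simp add: shift_def pre_def)

lemma pre_shift: "pre (z 0) (shift z) = z"
proof (rule ext)
  fix j show "pre (z 0) (shift z) j = z j" by (cases j) (auto simp: shift_def pre_def)
qed

lemma LO_eq: "LaxOleinik H V y = min (V (pre False y) + H (pre False y)) (V (pre True y) + H (pre True y))"
proof -
  have "{V x + H x | x. shift x = y} = {V (pre False y) + H (pre False y), V (pre True y) + H (pre True y)}"
  proof (intro equalityI subsetI)
    fix v assume "v \<in> {V x + H x | x. shift x = y}"
    then obtain x where x: "v = V x + H x" "shift x = y" by auto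
    have xv: "v = V (pre (x 0) y) + H (pre (x 0) y)" using x pre_shift[of x] by simp
    then show "v \<in> {V (pre False y) + H (pre False y), V (pre True y) + H (pre True y)}"
      by (cases "x 0") simp_all
  next
    fix v assume v: "v \<in> {V (pre False y) + H (pre False y), V (pre True y) + H (pre True y)}"
    show "v \<in> {V x + H x | x. shift x = y}"
    proof (cases "v = V (pre False y) + H (pre False y)")
      case True then show ?thesis by (intro CollectI exI[of _ "pre False y"]) simp
    next
      case False then have "v = V (pre True y) + H (pre True y)" using v by blast
      then show ?thesis by (intro CollectI exI[of _ "pre True y"]) simp
    qed
  qed
  then show ?thesis by (simp add: LaxOleinik_def)
qed

lemma tendsto_le_ev:
  fixes f g :: "nat \<Rightarrow> real"
  assumes "f \<longlonglongrightarrow> a" "g \<longlonglongrightarrow> b" "eventually (\<lambda>n. f n \<le> g n) sequentially"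
  shows "a \<le> b"
  using tendsto_le[OF trivial_limit_sequentially assms(2,1,3)] .

context
  fixes H :: "sigma \<Rightarrow> real"
  assumes Hc: "continuous_on UNIV H" and sv: "summable_variation H"
begin

lemma EE_lower: "v \<in> EE H n p x y \<Longrightarrow> - Tt H 0 \<le> v"
  using S_lower[OF Hc sv] by (auto simp: EE_def)

lemma EE_bdd: "bdd_below (EE H n p x y)"
  using EE_lower by (intro bdd_belowI[where m="- Tt H 0"]) auto

lemma EE_wit: "Ssum H (n + p) (splice (n + p) x y) \<in> EE H n p x y"
  unfolding EE_def
  by (rule CollectI, rule exI[of _ "n + p"], rule exI[of _ "splice (n + p) x y"]) (simp add: agree_splice)

lemma EE_ne: "EE H n p x y \<noteq> {}" using EE_wit by blast

lemma S_np_lower: "- Tt H 0 \<le> S_np H n p x y"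
  unfolding S_np_EE by (rule cInf_greatest[OF EE_ne]) (rule EE_lower)

lemma S_np_upper:
  assumes "good H x"
  shows "S_np H n p x y \<le> 2 * Tt H 0"
proof -
  have "S_np H n p x y \<le> Ssum H (n + p) (splice (n + p) x y)"
    unfolding S_np_EE by (rule cInf_lower[OF EE_wit EE_bdd])
  also have "\<dots> \<le> Ssum H (n + p) x + Tt H 0"
  proof -
    have "agree (n + p + 0) (splice (n + p) x y) x" by (simp add: agree_splice)
    from DL_S[OF Hc sv this] show ?thesis by linarith
  qed
  also have "\<dots> \<le> 2 * Tt H 0" using assms by (simp add: good_def)
  finally show ?thesis .
qed

lemma EE_sub: "n \<le> n' \<Longrightarrow> p \<le> p' \<Longrightarrow> EE H n' p' x y \<subseteq> EE H n p x y"
proof (rule subsetI)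
  fix v assume le: "n \<le> n'" "p \<le> p'" and "v \<in> EE H n' p' x y"
  then obtain k z where v: "v = Ssum H k z" "n' \<le> k" "agree p' z x" "agree p' ((shift ^^ k) z) y"
    by (auto simp: EE_def)
  show "v \<in> EE H n p x y" unfolding EE_def
  proof (rule CollectI, rule exI[of _ k], rule exI[of _ z])
    have "n \<le> k" using le v(2) by linarith
    moreover have "agree p z x" using agree_mono[OF v(3) le(2)] .
    moreover have "agree p ((shift ^^ k) z) y" using agree_mono[OF v(4) le(2)] .
    ultimately show "v = Ssum H k z \<and> n \<le> k \<and> agree p z x \<and> agree p ((shift ^^ k) z) y" using v(1) by blast
  qed
qed

lemma S_mono_n: "S_np H n p x y \<le> S_np H (Suc n) p x y"
  unfolding S_np_EE by (rule cInf_superset_mono[OF EE_ne EE_bdd EE_sub]) auto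

lemma S_mono_p: "S_np H n p x y \<le> S_np H n (Suc p) x y"
  unfolding S_np_EE by (rule cInf_superset_mono[OF EE_ne EE_bdd EE_sub]) auto

lemma LL_conv:
  assumes "good H x"
  shows "(\<lambda>n. S_np H n p x y) \<longlonglongrightarrow> LL H p x y" "S_np H n p x y \<le> LL H p x y"
proof -
  have inc: "incseq (\<lambda>n. S_np H n p x y)" by (rule incseq_SucI) (rule S_mono_n)
  have bd: "\<forall>i. S_np H i p x y \<le> 2 * Tt H 0" using S_np_upper[OF assms] by blast
  obtain L where L: "(\<lambda>n. S_np H n p x y) \<longlonglongrightarrow> L" "\<forall>i. S_np H i p x y \<le> L"
    by (rule incseq_convergent[OF inc bd])
  have "LL H p x y = L" unfolding LL_def by (rule limI[OF L(1)])
  then show "(\<lambda>n. S_np H n p x y) \<longlonglongrightarrow> LL H p x y" "S_np H n p x y \<le> LL H p x y" using L by auto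
qed

lemma LL_bounds:
  assumes "good H x"
  shows "- Tt H 0 \<le> LL H p x y" "LL H p x y \<le> 2 * Tt H 0"
proof -
  have "S_np H 0 p x y \<le> LL H p x y" by (rule LL_conv(2)[OF assms])
  then show "- Tt H 0 \<le> LL H p x y" using S_np_lower[of 0 p x y] by linarith
  show "LL H p x y \<le> 2 * Tt H 0"
    by (rule LIMSEQ_le_const2[OF LL_conv(1)[OF assms]]) (use S_np_upper[OF assms] in blast)
qed

lemma LL_mono:
  assumes "good H x"
  shows "LL H p x y \<le> LL H (Suc p) x y"
  by (rule tendsto_le_ev[OF LL_conv(1)[OF assms] LL_conv(1)[OF assms]]) (intro always_eventually allI S_mono_p)

lemma P_conv:
  assumes "good H x"
  shows "(\<lambda>p. LL H p x y) \<longlonglongrightarrow> peierls H x y"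
proof -
  have inc: "incseq (\<lambda>p. LL H p x y)" by (rule incseq_SucI) (rule LL_mono[OF assms])
  have bd: "\<forall>i. LL H i x y \<le> 2 * Tt H 0" using LL_bounds(2)[OF assms] by blast
  obtain L where L: "(\<lambda>p. LL H p x y) \<longlonglongrightarrow> L" "\<forall>i. LL H i x y \<le> L"
    by (rule incseq_convergent[OF inc bd])
  have "peierls H x y = L" unfolding peierls_LL by (rule limI[OF L(1)])
  then show ?thesis using L by simp
qed

lemma h_var:
  assumes "good H x" "agree m y y'"
  shows "peierls H x y' \<le> peierls H x y + Tt H m"
proof -
  have step1: "S_np H n p x y' \<le> S_np H n p x y + Tt H m" if "m \<le> p" "p \<le> n" for n p
  proof -
    have "S_np H n p x y' - Tt H m \<le> Inf (EE H n p x y)"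
    proof (rule cInf_greatest[OF EE_ne])
      fix v assume "v \<in> EE H n p x y"
      then obtain k z where v: "v = Ssum H k z" "n \<le> k" "agree p z x" "agree p ((shift ^^ k) z) y"
        by (auto simp: EE_def)
      define z' where "z' = splice k z y'"
      have a1: "agree p z' x" unfolding z'_def
        using agree_trans[OF agree_splice[of p k z y'] v(3)] that v(2) by simp
      have "agree m ((shift ^^ k) z) y'"
        using agree_trans[OF agree_mono[OF v(4) that(1)] assms(2)] .
      then have a2: "agree (k + m) z z'" unfolding z'_def by (rule agree_splice3)
      have a3: "agree p ((shift^^k) z') y'" by (simp add: z'_def)
      have mem: "Ssum H k z' \<in> EE H n p x y'" unfolding EE_def
        by (rule CollectI, rule exI[of _ k], rule exI[of _ z']) (use a1 a3 v(2) in simp)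
      have "S_np H n p x y' \<le> Ssum H k z'" unfolding S_np_EE by (rule cInf_lower[OF mem EE_bdd])
      moreover have "\<bar>Ssum H k z - Ssum H k z'\<bar> \<le> Tt H m" by (rule DL_S[OF Hc sv a2])
      ultimately show "S_np H n p x y' - Tt H m \<le> v" using v(1) by linarith
    qed
    then show ?thesis unfolding S_np_EE by linarith
  qed
  have step2: "LL H p x y' \<le> LL H p x y + Tt H m" if "m \<le> p" for p
  proof (rule tendsto_le_ev[OF LL_conv(1)[OF assms(1)]])
    show "(\<lambda>n. S_np H n p x y + Tt H m) \<longlonglongrightarrow> LL H p x y + Tt H m"
      by (intro tendsto_intros LL_conv(1)[OF assms(1)])
    show "\<forall>\<^sub>F n in sequentially. S_np H n p x y' \<le> S_np H n p x y + Tt H m"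
      using step1[OF that] by (auto simp: eventually_sequentially)
  qed
  show ?thesis
  proof (rule tendsto_le_ev[OF P_conv[OF assms(1)]])
    show "(\<lambda>p. LL H p x y + Tt H m) \<longlonglongrightarrow> peierls H x y + Tt H m"
      by (intro tendsto_intros P_conv[OF assms(1)])
    show "\<forall>\<^sub>F p in sequentially. LL H p x y' \<le> LL H p x y + Tt H m"
      using step2 by (auto simp: eventually_sequentially)
  qed
qed

lemma h_classK:
  assumes "good H x"
  shows "peierls H x \<in> classK H"
proof -
  have b: "\<bar>peierls H x y - peierls H x y'\<bar> \<le> Tt H m" if "agree m y y'" for m y y'
    using h_var[OF assms that] h_var[OF assms agree_sym[OF that]] by linarith
  have c: "continuous_on UNIV (peierls H x)"
    by (rule cont_from_var[where e="Tt H", OF b T_tendsto[OF Hc sv]])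
  have "var (peierls H x) n \<le> (\<Sum>k. var H (k + n + 1))" for n
    using var_le[of n "peierls H x" "Tt H n"] b by (simp add: Tt_def)
  then show ?thesis using c by (simp add: classK_def)
qed

lemma h_cal1:
  assumes "good H x"
  shows "peierls H x (shift z) \<le> peierls H x z + H z - Hbar H"
proof -
  let ?y = "shift z"
  have step1: "S_np H n p x ?y \<le> S_np H n (Suc p) x z + H z - Hbar H + var H (Suc p)" for n p
  proof -
    have "S_np H n p x ?y - (H z - Hbar H + var H (Suc p)) \<le> Inf (EE H n (Suc p) x z)"
    proof (rule cInf_greatest[OF EE_ne])
      fix v assume "v \<in> EE H n (Suc p) x z"
      then obtain k w where v: "v = Ssum H k w" "n \<le> k" "agree (Suc p) w x" "agree (Suc p) ((shift ^^ k) w) z"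
        by (auto simp: EE_def)
      have a1: "agree p w x" using agree_mono[OF v(3)] by simp
      have a2: "agree p ((shift ^^ Suc k) w) ?y" using agree_shift1[OF v(4)] by simp
      have mem: "Ssum H (Suc k) w \<in> EE H n p x ?y" unfolding EE_def
        by (rule CollectI, rule exI[of _ "Suc k"], rule exI[of _ w]) (use a1 a2 v(2) in simp)
      have "S_np H n p x ?y \<le> Ssum H (Suc k) w" unfolding S_np_EE by (rule cInf_lower[OF mem EE_bdd])
      moreover have "\<bar>H ((shift^^k) w) - H z\<bar> \<le> var H (Suc p)" by (rule var_cont_ge[OF Hc v(4)])
      ultimately show "S_np H n p x ?y - (H z - Hbar H + var H (Suc p)) \<le> v"
        using v(1) by (simp add: Ssum_Suc)
    qed
    then show ?thesis unfolding S_np_EE by linarith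
  qed
  have step2: "LL H p x ?y \<le> LL H (Suc p) x z + H z - Hbar H + var H (Suc p)" for p
  proof (rule tendsto_le_ev[OF LL_conv(1)[OF assms]])
    show "(\<lambda>n. S_np H n (Suc p) x z + H z - Hbar H + var H (Suc p)) \<longlonglongrightarrow> LL H (Suc p) x z + H z - Hbar H + var H (Suc p)"
      by (intro tendsto_intros LL_conv(1)[OF assms])
  qed (intro always_eventually allI step1)
  show ?thesis
  proof (rule tendsto_le_ev[OF P_conv[OF assms]])
    have "(\<lambda>p. LL H (Suc p) x z) \<longlonglongrightarrow> peierls H x z" using LIMSEQ_Suc[OF P_conv[OF assms]] .
    moreover have "(\<lambda>p. var H (Suc p)) \<longlonglongrightarrow> 0" using LIMSEQ_Suc[OF varH_tendsto[OF Hc sv]] .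
    ultimately have "(\<lambda>p. LL H (Suc p) x z + H z - Hbar H + var H (Suc p)) \<longlonglongrightarrow> peierls H x z + H z - Hbar H + 0"
      by (intro tendsto_intros)
    then show "(\<lambda>p. LL H (Suc p) x z + H z - Hbar H + var H (Suc p)) \<longlonglongrightarrow> peierls H x z + H z - Hbar H"
      by simp
  qed (intro always_eventually allI step2)
qed

lemma h_cal2:
  assumes "good H x"
  shows "min (peierls H x (pre False y) + H (pre False y)) (peierls H x (pre True y) + H (pre True y)) - Hbar H
         \<le> peierls H x y"
proof -
  define F where "F n p = min (S_np H n p x (pre False y) + H (pre False y)) (S_np H n p x (pre True y) + H (pre True y))" for n p
  define G where "G p = min (LL H p x (pre False y) + H (pre False y)) (LL H p x (pre True y) + H (pre True y))" for p
  have step1: "F n p - Hbar H - var H (Suc p) \<le> S_np H (Suc n) p x y" for n p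
  proof -
    have "F n p - Hbar H - var H (Suc p) \<le> Inf (EE H (Suc n) p x y)"
    proof (rule cInf_greatest[OF EE_ne])
      fix v assume "v \<in> EE H (Suc n) p x y"
      then obtain k w where v: "v = Ssum H k w" "Suc n \<le> k" "agree p w x" "agree p ((shift ^^ k) w) y"
        by (auto simp: EE_def)
      then obtain k' where k': "k = Suc k'" by (cases k) auto
      define b where "b = (shift^^k') w 0"
      have v4: "\<forall>j<p. w (j + k) = y j" using v(4) by (simp add: agree_def funpow_shift)
      have ag: "agree (Suc p) ((shift^^k') w) (pre b y)"
        using v4 k' unfolding agree_def b_def pre_def
        by (auto simp: funpow_shift split: nat.splits)
      have mem: "Ssum H k' w \<in> EE H n p x (pre b y)" unfolding EE_def
        by (rule CollectI, rule exI[of _ k'], rule exI[of _ w]) (use v k' agree_mono[OF ag, of p] in simp)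
      have "S_np H n p x (pre b y) \<le> Ssum H k' w" unfolding S_np_EE by (rule cInf_lower[OF mem EE_bdd])
      moreover have "\<bar>H ((shift^^k') w) - H (pre b y)\<bar> \<le> var H (Suc p)" by (rule var_cont_ge[OF Hc ag])
      moreover have "F n p \<le> S_np H n p x (pre b y) + H (pre b y)" unfolding F_def by (cases b) auto
      ultimately show "F n p - Hbar H - var H (Suc p) \<le> v"
        using v(1) k' by (simp add: Ssum_Suc)
    qed
    then show ?thesis unfolding S_np_EE by linarith
  qed
  have step2: "G p - Hbar H - var H (Suc p) \<le> LL H p x y" for p
  proof (rule tendsto_le_ev)
    show "(\<lambda>n. F n p - Hbar H - var H (Suc p)) \<longlonglongrightarrow> G p - Hbar H - var H (Suc p)"
      unfolding F_def G_def by (intro tendsto_intros LL_conv(1)[OF assms])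
    show "(\<lambda>n. S_np H (Suc n) p x y) \<longlonglongrightarrow> LL H p x y" using LIMSEQ_Suc[OF LL_conv(1)[OF assms]] .
  qed (intro always_eventually allI step1)
  show ?thesis
  proof (rule tendsto_le_ev[OF _ P_conv[OF assms]])
    have "(\<lambda>p. var H (Suc p)) \<longlonglongrightarrow> 0" using LIMSEQ_Suc[OF varH_tendsto[OF Hc sv]] .
    then have "(\<lambda>p. G p - Hbar H - var H (Suc p)) \<longlonglongrightarrow> min (peierls H x (pre False y) + H (pre False y)) (peierls H x (pre True y) + H (pre True y)) - Hbar H - 0"
      unfolding G_def by (intro tendsto_intros P_conv[OF assms])
    then show "(\<lambda>p. G p - Hbar H - var H (Suc p)) \<longlonglongrightarrow> min (peierls H x (pre False y) + H (pre False y)) (peierls H x (pre True y) + H (pre True y)) - Hbar H"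
      by simp
  qed (intro always_eventually allI step2)
qed

lemma h_calibrated:
  assumes "good H x"
  shows "calibrated_subaction H (peierls H x)"
proof -
  have c: "continuous_on UNIV (peierls H x)" using h_classK[OF assms] by (simp add: classK_def)
  have "LaxOleinik H (peierls H x) y = peierls H x y + Hbar H" for y
  proof -
    have f1: "peierls H x y \<le> peierls H x (pre False y) + H (pre False y) - Hbar H"
      using h_cal1[OF assms, of "pre False y"] by simp
    have f2: "peierls H x y \<le> peierls H x (pre True y) + H (pre True y) - Hbar H"
      using h_cal1[OF assms, of "pre True y"] by simp
    have f3: "min (peierls H x (pre False y) + H (pre False y)) (peierls H x (pre True y) + H (pre True y)) - Hbar H
         \<le> peierls H x y" by (rule h_cal2[OF assms])
    have m: "min (peierls H x (pre False y) + H (pre False y)) (peierls H x (pre True y) + H (pre True y))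
        = peierls H x y + Hbar H"
    proof (cases "peierls H x (pre False y) + H (pre False y) \<le> peierls H x (pre True y) + H (pre True y)")
      case True
      then have "min (peierls H x (pre False y) + H (pre False y)) (peierls H x (pre True y) + H (pre True y))
        = peierls H x (pre False y) + H (pre False y)" by simp
      then show ?thesis using f1 f3 by linarith
    next
      case False
      then have "min (peierls H x (pre False y) + H (pre False y)) (peierls H x (pre True y) + H (pre True y))
        = peierls H x (pre True y) + H (pre True y)" by simp
      then show ?thesis using f2 f3 by linarith
    qed
    then show ?thesis by (simp add: LO_eq)
  qed
  then show ?thesis using c by (simp add: calibrated_subaction_def)
qed

end


lemma funpow_Suc_shift: "(shift^^Suc i) w = (shift^^i) (shift w)"
  by (simp only: funpow_Suc_right comp_def)

lemma Ssum_Suc_left: "Ssum H (Suc k) w = H w - Hbar H + Ssum H k (shift w)"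
proof -
  have "(\<Sum>i<Suc k. H ((shift^^i) w) - Hbar H) = (H ((shift^^0) w) - Hbar H) + (\<Sum>i<k. H ((shift^^Suc i) w) - Hbar H)"
    by (rule sum.lessThan_Suc_shift)
  then show ?thesis unfolding Ssum_def funpow_Suc_shift by simp
qed

definition backpre :: "(sigma \<Rightarrow> real) \<Rightarrow> (sigma \<Rightarrow> real) \<Rightarrow> sigma \<Rightarrow> sigma" where
  "backpre H V y = (SOME z. shift z = y \<and> V y + Hbar H = V z + H z)"

definition chain :: "(sigma \<Rightarrow> real) \<Rightarrow> (sigma \<Rightarrow> real) \<Rightarrow> sigma \<Rightarrow> nat \<Rightarrow> sigma" where
  "chain H V y j = (backpre H V ^^ j) y"

context
  fixes H :: "sigma \<Rightarrow> real"
  assumes Hc: "continuous_on UNIV H" and sv: "summable_variation H"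
begin

context
  fixes V :: "sigma \<Rightarrow> real"
  assumes Vc: "continuous_on UNIV V" and Vcal: "calibrated_subaction H V"
begin

lemma V_LO: "min (V (pre False y) + H (pre False y)) (V (pre True y) + H (pre True y)) = V y + Hbar H"
  using Vcal LO_eq[of H V y] by (simp add: calibrated_subaction_def)

lemma V_sub: "V (shift z) \<le> V z + H z - Hbar H"
proof -
  have "min (V (pre False (shift z)) + H (pre False (shift z))) (V (pre True (shift z)) + H (pre True (shift z)))
     \<le> V (pre (z 0) (shift z)) + H (pre (z 0) (shift z))" by (cases "z 0") auto
  then show ?thesis using V_LO[of "shift z"] pre_shift[of z] by simp
qed

lemma V_cal: "\<exists>z. shift z = y \<and> V y + Hbar H = V z + H z"
proof (cases "V (pre False y) + H (pre False y) \<le> V (pre True y) + H (pre True y)")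
  case True then show ?thesis using V_LO[of y] by (intro exI[of _ "pre False y"]) simp
next
  case False then show ?thesis using V_LO[of y] by (intro exI[of _ "pre True y"]) simp
qed

lemma backpre: "shift (backpre H V y) = y" "V y + Hbar H = V (backpre H V y) + H (backpre H V y)"
  using someI_ex[OF V_cal[of y]] unfolding backpre_def by auto

lemma chain_Suc: "chain H V y (Suc j) = backpre H V (chain H V y j)"
  by (simp add: chain_def)

lemma chain_shift: "shift (chain H V y (Suc j)) = chain H V y j"
  by (simp add: chain_Suc backpre)

lemma chain_iter: "(shift^^j) (chain H V y j) = y"
proof (induction j)
  case 0 then show ?case by (simp add: chain_def)
next
  case (Suc j)
  have "(shift^^Suc j) (chain H V y (Suc j)) = (shift^^j) (shift (chain H V y (Suc j)))"
    by (rule funpow_Suc_shift)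
  then show ?case using Suc chain_shift by simp
qed

lemma chain_Ssum: "Ssum H j (chain H V y j) = V y - V (chain H V y j)"
proof (induction j)
  case 0 then show ?case by (simp add: Ssum_def chain_def)
next
  case (Suc j)
  have "V (chain H V y j) + Hbar H = V (chain H V y (Suc j)) + H (chain H V y (Suc j))"
    using backpre(2)[of "chain H V y j"] by (simp add: chain_Suc)
  then show ?case using Suc by (simp add: Ssum_Suc_left chain_shift)
qed

lemma V_iter_sub: "V ((shift^^k) z) \<le> V z + Ssum H k z"
proof (induction k)
  case 0 then show ?case by (simp add: Ssum_def)
next
  case (Suc k)
  have "V ((shift^^Suc k) z) \<le> V ((shift^^k) z) + H ((shift^^k) z) - Hbar H"
    using V_sub[of "(shift^^k) z"] by simp
  then show ?case using Suc by (simp add: Ssum_Suc)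
qed

lemma V_var: 
  assumes "agree m y y'"
  shows "V y' \<le> V y + Tt H m"
proof -
  have b: "V y' \<le> V y + Tt H m + var V j" for j
  proof -
    define z where "z = chain H V y j"
    define z' where "z' = splice j z y'"
    have "agree m ((shift^^j) z) y'" using assms chain_iter by (simp add: z_def)
    then have a: "agree (j + m) z z'" unfolding z'_def by (rule agree_splice3)
    have "V y' = V ((shift^^j) z')" by (simp add: z'_def)
    also have "\<dots> \<le> V z' + Ssum H j z'" by (rule V_iter_sub)
    also have "\<dots> \<le> V z' + Ssum H j z + Tt H m" using DL_S[OF Hc sv a] by linarith
    also have "\<dots> = V z' + V y - V z + Tt H m" using chain_Ssum by (simp add: z_def)
    also have "\<dots> \<le> V y + Tt H m + var V j"
    proof -
      have "agree j z' z" unfolding z'_def by (rule agree_splice) simp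
      then have "\<bar>V z' - V z\<bar> \<le> var V j" by (rule var_cont_ge[OF Vc])
      then show ?thesis by linarith
    qed
    finally show ?thesis .
  qed
  show ?thesis
  proof (rule tendsto_le_ev)
    show "(\<lambda>j. V y') \<longlonglongrightarrow> V y'" by simp
    have "(\<lambda>j. V y + Tt H m + var V j) \<longlonglongrightarrow> V y + Tt H m + 0"
      by (intro tendsto_intros var_tendsto[OF Vc])
    then show "(\<lambda>j. V y + Tt H m + var V j) \<longlonglongrightarrow> V y + Tt H m" by simp
  qed (intro always_eventually allI b)
qed

lemma V_classK: "V \<in> classK H"
proof -
  have b: "\<bar>V y - V y'\<bar> \<le> Tt H m" if "agree m y y'" for m y y'
    using V_var[OF that] V_var[OF agree_sym[OF that]] by linarith
  have "var V n \<le> (\<Sum>k. var H (k + n + 1))" for n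
    using var_le[of n V "Tt H n"] b by (simp add: Tt_def)
  then show ?thesis using Vc by (simp add: classK_def)
qed

lemma V_le_h:
  assumes "good H x"
  shows "V y \<le> V x + peierls H x y"
proof -
  have s: "V y - V x - 2 * var V p \<le> S_np H n p x y" for n p
    unfolding S_np_EE
  proof (rule cInf_greatest[OF EE_ne[OF Hc sv]])
    fix v assume "v \<in> EE H n p x y"
    then obtain k z where v: "v = Ssum H k z" "n \<le> k" "agree p z x" "agree p ((shift ^^ k) z) y"
      by (auto simp: EE_def)
    have "\<bar>V ((shift ^^ k) z) - V y\<bar> \<le> var V p" by (rule var_cont_ge[OF Vc v(4)])
    moreover have "\<bar>V z - V x\<bar> \<le> var V p" by (rule var_cont_ge[OF Vc v(3)])
    moreover have "V ((shift^^k) z) \<le> V z + Ssum H k z" by (rule V_iter_sub)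
    ultimately show "V y - V x - 2 * var V p \<le> v" using v(1) by linarith
  qed
  have l: "V y - V x - 2 * var V p \<le> LL H p x y" for p
    using s[of p 0] LL_conv(2)[OF Hc sv assms, of 0 p y] by linarith
  have "V y - V x \<le> peierls H x y"
  proof (rule tendsto_le_ev[OF _ P_conv[OF Hc sv assms]])
    have "(\<lambda>p. V y - V x - 2 * var V p) \<longlonglongrightarrow> V y - V x - 2 * 0"
      by (intro tendsto_intros var_tendsto[OF Vc])
    then show "(\<lambda>p. V y - V x - 2 * var V p) \<longlonglongrightarrow> V y - V x" by simp
  qed (intro always_eventually allI l)
  then show ?thesis by simp
qed

lemma h_le_V:
  assumes "good H x" and rec: "\<And>p N. \<exists>j\<ge>N. agree p (chain H V y j) x"
  shows "V x + peierls H x y \<le> V y"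
proof -
  have s: "S_np H n p x y \<le> V y - V x + var V p" for n p
  proof -
    obtain j where j: "j \<ge> n" "agree p (chain H V y j) x" using rec by blast
    have mem: "Ssum H j (chain H V y j) \<in> EE H n p x y" unfolding EE_def
      by (rule CollectI, rule exI[of _ j], rule exI[of _ "chain H V y j"]) (use j chain_iter in simp)
    have "S_np H n p x y \<le> Ssum H j (chain H V y j)"
      unfolding S_np_EE by (rule cInf_lower[OF mem EE_bdd[OF Hc sv]])
    also have "\<dots> = V y - V (chain H V y j)" by (rule chain_Ssum)
    also have "\<dots> \<le> V y - V x + var V p" using var_cont_ge[OF Vc j(2)] by linarith
    finally show ?thesis .
  qed
  have l: "LL H p x y \<le> V y - V x + var V p" for p
    by (rule LIMSEQ_le_const2[OF LL_conv(1)[OF Hc sv assms(1)]]) (use s in blast)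
  have "peierls H x y \<le> V y - V x"
  proof (rule tendsto_le_ev[OF P_conv[OF Hc sv assms(1)]])
    have "(\<lambda>p. V y - V x + var V p) \<longlonglongrightarrow> V y - V x + 0"
      by (intro tendsto_intros var_tendsto[OF Vc])
    then show "(\<lambda>p. V y - V x + var V p) \<longlonglongrightarrow> V y - V x" by simp
  qed (intro always_eventually allI l)
  then show ?thesis by simp
qed

end
end


definition coef :: "sigma \<Rightarrow> nat \<Rightarrow> real" where
  "coef z j = (if z j then 1/2 else 0) * (1/4)^j"

definition emb :: "sigma \<Rightarrow> real" where
  "emb z = suminf (coef z)"

lemma geo: "(\<lambda>j. (1/4::real)^j) sums (4/3)"
  using geometric_sums[of "1/4::real"] by simp

lemma tailbd:
  fixes b :: "nat \<Rightarrow> real"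
  assumes b: "\<And>j. \<bar>b j\<bar> \<le> (1/2) * (1/4)^j"
  shows "summable b" "\<bar>\<Sum>j. b (j + n)\<bar> \<le> (2/3) * (1/4)^n"
proof -
  have g: "(\<lambda>j. (1/2::real) * (1/4)^n * (1/4)^j) sums ((1/2) * (1/4)^n * (4/3))"
    by (rule sums_mult[OF geo])
  have geq: "(1/2) * (1/4)^n * (1/4::real)^j = (1/2) * (1/4)^(j+n)" for j
    by (simp add: power_add)
  have gs: "summable (\<lambda>j. (1/2) * (1/4::real)^(j+n))" using g geq sums_summable by fastforce
  have gv: "(\<Sum>j. (1/2) * (1/4::real)^(j+n)) = (2/3) * (1/4)^n" using g geq sums_unique by fastforce
  have bs: "\<bar>b (j+n)\<bar> \<le> (1/2) * (1/4)^(j+n)" for j using b .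
  have sb: "summable (\<lambda>j. b (j+n))"
    by (rule summable_comparison_test[OF _ gs]) (use bs in auto)
  then show "summable b" using summable_iff_shift[of b n] by simp
  have "(\<Sum>j. b (j+n)) \<le> (\<Sum>j. (1/2) * (1/4::real)^(j+n))"
    by (rule suminf_le[OF _ sb gs]) (rule abs_le_D1[OF bs])
  moreover have "(\<Sum>j. - ((1/2) * (1/4::real)^(j+n))) \<le> (\<Sum>j. b (j+n))"
    by (rule suminf_le[OF _ summable_minus[OF gs] sb]) (use abs_le_D2[OF bs] in \<open>simp only: minus_le_iff\<close>)
  ultimately show "\<bar>\<Sum>j. b (j + n)\<bar> \<le> (2/3) * (1/4)^n"
    using gv suminf_minus[OF gs] by linarith
qed

lemma coef_bd: "\<bar>coef z j\<bar> \<le> (1/2) * (1/4)^j"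
  by (simp add: coef_def)

lemma coef_diff_bd: "\<bar>coef z j - coef z' j\<bar> \<le> (1/2) * (1/4)^j"
  by (auto simp: coef_def)

lemma coef_summable: "summable (coef z)"
  using tailbd(1)[OF coef_bd] .

lemma emb_diff: "emb z - emb z' = (\<Sum>j. coef z j - coef z' j)"
  unfolding emb_def by (rule suminf_diff[OF coef_summable coef_summable])

lemma emb_bound: "\<bar>emb z\<bar> \<le> 2/3"
  using tailbd(2)[of "coef z" 0, OF coef_bd] by (simp add: emb_def)

lemma emb_var:
  assumes "agree n z z'"
  shows "\<bar>emb z - emb z'\<bar> \<le> (2/3) * (1/4)^n"
proof -
  define d where "d j = coef z j - coef z' j" for j
  have d0: "d j = 0" if "j < n" for j using assms that by (simp add: d_def coef_def agree_def)
  have ds: "summable d" using tailbd(1)[OF coef_diff_bd] by (simp add: d_def[abs_def])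
  have "emb z - emb z' = suminf d" by (simp add: emb_diff d_def[abs_def])
  also have "\<dots> = (\<Sum>j. d (j + n))"
    using suminf_split_initial_segment[OF ds, of n] d0 by simp
  finally show ?thesis using tailbd(2)[of "\<lambda>j. coef z j - coef z' j" n, OF coef_diff_bd] by (simp add: d_def)
qed

lemma emb_cont: "continuous_on UNIV emb"
proof (rule cont_from_var[where e="\<lambda>n. (2/3) * (1/4)^n"])
  show "\<bar>emb x - emb y\<bar> \<le> (2/3) * (1/4)^n" if "agree n x y" for n x y using emb_var[OF that] .
  have "(\<lambda>n. (2/3) * (1/4::real)^n) \<longlonglongrightarrow> (2/3) * 0"
    by (intro tendsto_intros LIMSEQ_power_zero) simp
  then show "(\<lambda>n. (2/3) * (1/4::real)^n) \<longlonglongrightarrow> 0" by simp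
qed

lemma emb_inj: "inj emb"
proof (rule injI, rule ccontr)
  fix z z' assume eq: "emb z = emb z'" and ne: "z \<noteq> z'"
  then obtain i0 where "z i0 \<noteq> z' i0" by auto
  define i where "i = (LEAST i. z i \<noteq> z' i)"
  have zi: "z i \<noteq> z' i" unfolding i_def by (rule LeastI[of _ i0]) fact
  have before: "z j = z' j" if "j < i" for j using not_less_Least[of j "\<lambda>i. z i \<noteq> z' i"] that i_def by blast
  define d where "d j = coef z (j + i) - coef z' (j + i)" for j
  have dd: "\<bar>d j\<bar> \<le> (1/2) * (1/4)^i * (1/4)^j" for j
    using coef_diff_bd[of z "j+i" z'] by (simp add: d_def power_add mult_ac)
  have ds0: "summable (\<lambda>j. coef z j - coef z' j)" using tailbd(1)[OF coef_diff_bd] .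
  have ds: "summable d" unfolding d_def using summable_iff_shift[of "\<lambda>j. coef z j - coef z' j" i] ds0 by simp
  have "0 = emb z - emb z'" using eq by simp
  also have "\<dots> = (\<Sum>j. coef z j - coef z' j)" by (rule emb_diff)
  also have "\<dots> = suminf d"
    using suminf_split_initial_segment[OF ds0, of i] before by (simp add: d_def[abs_def] coef_def)
  also have "\<dots> = (\<Sum>j. d (j + 1)) + d 0"
    using suminf_split_initial_segment[OF ds, of 1] by simp
  finally have z: "d 0 = - (\<Sum>j. d (j + 1))" by simp
  have "\<bar>\<Sum>j. d (j + 1)\<bar> \<le> (2/3) * (1/4)^(i+1)"
  proof -
    define e where "e j = coef z (j + i + 1) - coef z' (j + i + 1)" for j
    have "(\<lambda>j. d (j+1)) = (\<lambda>j. (\<lambda>k. coef z k - coef z' k) (j + (i + 1)))"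
      by (simp add: d_def add.commute add.left_commute)
    then show ?thesis using tailbd(2)[of "\<lambda>j. coef z j - coef z' j" "i+1", OF coef_diff_bd] by simp
  qed
  moreover have "\<bar>d 0\<bar> = (1/2) * (1/4)^i" using zi by (cases "z i") (auto simp: d_def coef_def)
  moreover have q: "(1/4::real)^i > 0" by simp
  moreover have e: "(2/3) * (1/4::real)^(i+1) = (1/6) * (1/4)^i" by (simp add: power_add)
  moreover have "\<bar>d 0\<bar> = \<bar>\<Sum>j. d (j + 1)\<bar>" using z by simp
  ultimately show False by linarith
qed

lemma emb_range: "-1 < emb z \<and> emb z \<le> 2"
  using abs_le_D1[OF emb_bound[of z]] abs_le_D2[OF emb_bound[of z]] by linarith


definition cyl :: "nat \<Rightarrow> sigma \<Rightarrow> sigma set" where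
  "cyl p x = {z. agree p z x}"

definition cylgen :: "sigma set set" where
  "cylgen = insert {} {cyl p x | p x. True}"

lemma cyl_open': "open (cyl p x)" unfolding cyl_def by (rule cyl_open)

lemma cyl_int_le:
  assumes "p \<le> q"
  shows "cyl p x \<inter> cyl q y \<in> cylgen"
proof (cases "agree p y x")
  case True
  have "cyl p x \<inter> cyl q y = cyl q y"
  proof (intro equalityI subsetI)
    fix z assume "z \<in> cyl q y"
    then have "agree p z y" using agree_mono assms by (auto simp: cyl_def)
    then have "agree p z x" using agree_trans True by blast
    then show "z \<in> cyl p x \<inter> cyl q y" using \<open>z \<in> cyl q y\<close> by (simp add: cyl_def)
  qed auto
  then show ?thesis by (auto simp: cylgen_def)
next
  case False
  have "cyl p x \<inter> cyl q y = {}"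
  proof (rule ccontr)
    assume "cyl p x \<inter> cyl q y \<noteq> {}"
    then obtain z where z: "agree p z x" "agree q z y" by (auto simp: cyl_def)
    then have "agree p z y" using agree_mono assms by blast
    then have "agree p y x" using agree_trans agree_sym z(1) by blast
    then show False using False by simp
  qed
  then show ?thesis by (simp add: cylgen_def)
qed

lemma cylgen_Int_stable: "Int_stable cylgen"
  unfolding Int_stable_def
proof (intro ballI)
  fix a b assume a: "a \<in> cylgen" and b: "b \<in> cylgen"
  show "a \<inter> b \<in> cylgen"
  proof (cases "a = {} \<or> b = {}")
    case True then show ?thesis by (auto simp: cylgen_def)
  next
    case False
    then obtain p x q y where ab: "a = cyl p x" "b = cyl q y" using a b by (auto simp: cylgen_def)
    show ?thesis
    proof (cases "p \<le> q")
      case True then show ?thesis using cyl_int_le ab by simp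
    next
      case False then have "q \<le> p" by simp
      then show ?thesis using cyl_int_le[of q p y x] ab by (simp add: Int_commute)
    qed
  qed
qed

lemma cyl_countable: "countable {cyl p x | p x. True}"
proof -
  have "{cyl p x | p x. True} \<subseteq> (\<lambda>(p, xs). cyl p (\<lambda>j. j < length xs \<and> xs ! j)) ` (UNIV :: (nat \<times> bool list) set)"
  proof
    fix c assume "c \<in> {cyl p x | p x. True}"
    then obtain p x where c: "c = cyl p x" by auto
    have "cyl p x = cyl p (\<lambda>j. j < length (map x [0..<p]) \<and> (map x [0..<p]) ! j)"
      by (simp add: cyl_def agree_def)
    then show "c \<in> (\<lambda>(p, xs). cyl p (\<lambda>j. j < length xs \<and> xs ! j)) ` UNIV"
      using c by (intro image_eqI[of _ _ "(p, map x [0..<p])"]) simp_all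
  qed
  then show ?thesis by (rule countable_subset) simp
qed

lemma borel_cyl: "sets (borel :: sigma measure) = sigma_sets UNIV cylgen"
proof -
  have sa: "sigma_algebra UNIV (sigma_sets UNIV cylgen)"
    by (rule sigma_algebra_sigma_sets) simp
  have "sigma_sets UNIV {S. open S} \<subseteq> sigma_sets UNIV cylgen"
  proof (rule sigma_sets_mono, rule subsetI)
    fix U :: "sigma set" assume "U \<in> {S. open S}"
    then have oU: "open U" by simp
    let ?C = "{c \<in> {cyl p x | p x. True}. c \<subseteq> U}"
    have "U = \<Union>?C"
    proof (intro equalityI subsetI)
      fix x assume "x \<in> U"
      then obtain n where "\<forall>z. agree n z x \<longrightarrow> z \<in> U" using cyl_basis[OF oU] by blast
      then have "cyl n x \<in> ?C" by (auto simp: cyl_def)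
      moreover have "x \<in> cyl n x" by (simp add: cyl_def)
      ultimately show "x \<in> \<Union>?C" by blast
    qed auto
    moreover have "\<Union>?C \<in> sigma_sets UNIV cylgen"
    proof (rule sigma_algebra.countable_Union[OF sa])
      show "countable ?C" by (rule countable_subset[OF _ cyl_countable]) auto
      show "?C \<subseteq> sigma_sets UNIV cylgen" by (auto simp: cylgen_def)
    qed
    ultimately show "U \<in> sigma_sets UNIV cylgen" by simp
  qed
  moreover have "sigma_sets UNIV cylgen \<subseteq> sigma_sets UNIV {S. open S}"
  proof (rule sigma_sets_mono, rule subsetI)
    fix c assume "c \<in> cylgen"
    then have "open c" by (auto simp: cylgen_def cyl_open')
    then show "c \<in> sigma_sets UNIV {S. open S}" by auto
  qed
  ultimately show ?thesis unfolding sets_borel by blast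
qed

lemma measure_eq_cyl:
  assumes fM: "finite_measure M" and fN: "finite_measure N"
    and sM: "sets M = sets borel" and sN: "sets N = sets borel"
    and eq: "\<And>p x. emeasure M (cyl p x) = emeasure N (cyl p x)"
  shows "M = N"
proof (rule measure_eqI_generator_eq[OF cylgen_Int_stable, where \<Omega>=UNIV and A="\<lambda>i. cyl 0 undefined"])
  show "cylgen \<subseteq> Pow UNIV" by simp
  show "\<And>X. X \<in> cylgen \<Longrightarrow> emeasure M X = emeasure N X" using eq by (auto simp: cylgen_def)
  show "sets M = sigma_sets UNIV cylgen" using sM borel_cyl by simp
  show "sets N = sigma_sets UNIV cylgen" using sN borel_cyl by simp
  show "range (\<lambda>i. cyl 0 undefined) \<subseteq> cylgen" by (auto simp: cylgen_def)
  show "(\<Union>i. cyl 0 undefined) = UNIV" by (simp add: cyl_def)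
  show "\<And>i. emeasure M (cyl 0 undefined) \<noteq> \<infinity>" using finite_measure.emeasure_finite[OF fM] by simp
qed

lemma ind_cyl_cont: "continuous_on UNIV (\<lambda>z. indicator (cyl p x) z :: real)"
proof (rule cont_from_var[where e="\<lambda>n. if p \<le> n then 0 else 1"])
  fix n z z' assume a: "agree n z z'"
  show "\<bar>indicator (cyl p x) z - indicator (cyl p x) z'\<bar> \<le> (if p \<le> n then 0 else (1::real))"
  proof (cases "p \<le> n")
    case True
    then have "agree p z z'" using agree_mono a by blast
    then have "z \<in> cyl p x \<longleftrightarrow> z' \<in> cyl p x" unfolding cyl_def using agree_trans agree_sym by blast
    then show ?thesis using True by (simp add: indicator_def)
  next
    case False then show ?thesis by (simp add: indicator_def)
  qed
next
  have "eventually (\<lambda>n. (if p \<le> n then 0 else 1::real) = 0) sequentially"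
    by (auto simp: eventually_sequentially)
  then show "(\<lambda>n. if p \<le> n then 0 else 1::real) \<longlonglongrightarrow> 0"
    by (rule tendsto_eventually)
qed


lemma KB:
  fixes w :: "nat \<Rightarrow> sigma"
  obtains r :: "nat \<Rightarrow> nat" and M :: "sigma measure"
  where "strict_mono r" "prob_space M" "sets M = sets borel"
    "\<And>f. continuous_on UNIV f \<Longrightarrow>
       (\<lambda>i. (\<Sum>j<Suc (r i). f (w j)) / real (Suc (r i))) \<longlonglongrightarrow> integral\<^sup>L M f"
proof -
  define emp where "emp N = distr (measure_pmf (pmf_of_set {..<Suc N})) borel (\<lambda>j. emb (w j))" for N
  have fin: "{..<Suc N} \<noteq> {}" "finite {..<Suc N}" for N by auto
  have embm: "(\<lambda>j. emb (w j)) \<in> measurable (measure_pmf (pmf_of_set {..<Suc N})) borel" for N by simp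
  have rd: "real_distribution (emp N)" for N
  proof (intro real_distribution.intro real_distribution_axioms.intro)
    show "prob_space (emp N)" unfolding emp_def
      by (rule prob_space.prob_space_distr[OF _ embm]) (simp add: prob_space_measure_pmf)
    show "sets (emp N) = sets borel" by (simp add: emp_def)
  qed
  have int_emp: "integral\<^sup>L (emp N) G = (\<Sum>j<Suc N. G (emb (w j))) / real (Suc N)"
    if "G \<in> borel_measurable borel" for N and G :: "real \<Rightarrow> real"
    unfolding emp_def by (subst integral_distr[OF embm that]) (simp add: integral_pmf_of_set[OF fin])
  have tight: "tight emp"
    unfolding tight_def
  proof (intro conjI allI impI)
    show "real_distribution (emp n)" for n by (rule rd)
    fix e :: real assume "0 < e"
    have "measure (emp n) {-1<..2} = 1" for n
    proof -
      have "measure (emp n) {-1<..2} = measure (measure_pmf (pmf_of_set {..<Suc n})) ((\<lambda>j. emb (w j)) -` {-1<..2} \<inter> UNIV)"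
        unfolding emp_def by (subst measure_distr[OF embm]) simp_all
      also have "(\<lambda>j. emb (w j)) -` {-1<..2} \<inter> UNIV = UNIV" using emb_range by auto
      also have "measure (measure_pmf (pmf_of_set {..<Suc n})) UNIV = 1"
        using measure_pmf.prob_space[of "pmf_of_set {..<Suc n}"] by simp
      finally show ?thesis .
    qed
    then show "\<exists>a b. a < b \<and> (\<forall>n. 1 - e < measure (emp n) {a<..b})"
      using \<open>0 < e\<close> by (intro exI[of _ "-1"] exI[of _ 2]) auto
  qed
  obtain r \<mu>R where r: "strict_mono r" and rdR: "real_distribution \<mu>R" and wc0: "weak_conv_m (emp \<circ> id \<circ> r) \<mu>R"
    using tight_imp_convergent_subsubsequence[OF tight, of id] by (auto simp: strict_mono_def)
  have wc: "weak_conv_m (emp \<circ> r) \<mu>R" using wc0 by simp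
  interpret R: real_distribution \<mu>R by (rule rdR)
  have rdc: "real_distribution ((emp \<circ> r) n)" for n using rd by simp
  have conv: "(\<lambda>i. (\<Sum>j<Suc (r i). G (emb (w j))) / real (Suc (r i))) \<longlonglongrightarrow> integral\<^sup>L \<mu>R G"
    if G: "continuous_on UNIV G" "\<And>t. \<bar>G t\<bar> \<le> B" for G :: "real \<Rightarrow> real" and B
  proof -
    have "(\<lambda>n. integral\<^sup>L ((emp \<circ> r) n) G) \<longlonglongrightarrow> integral\<^sup>L \<mu>R G"
      using weak_conv_imp_integral_bdd_continuous_conv[OF rdc rdR wc, of G B] G
      by (simp add: continuous_on_eq_continuous_at)
    moreover have "integral\<^sup>L ((emp \<circ> r) n) G = (\<Sum>j<Suc (r n). G (emb (w j))) / real (Suc (r n))" for n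
      using int_emp[of G "r n"] borel_measurable_continuous_onI[OF G(1)] by simp
    ultimately show ?thesis by simp
  qed
  define K where "K = range emb"
  have cK: "compact K" unfolding K_def by (rule compact_continuous_image[OF emb_cont compact_sigma])
  then have clK: "closed K" by (rule compact_imp_closed)
  have neK: "K \<noteq> {}" by (simp add: K_def)
  define g where "g t = min 1 (infdist t K)" for t
  have gc: "continuous_on UNIV g" unfolding g_def by (intro continuous_intros)
  have gb: "\<bar>g t\<bar> \<le> 1" for t unfolding g_def using infdist_nonneg[of t K] by auto
  have g0: "(\<lambda>i. (\<Sum>j<Suc (r i). g (emb (w j))) / real (Suc (r i))) \<longlonglongrightarrow> integral\<^sup>L \<mu>R g"
    by (rule conv[OF gc gb])
  moreover have "(\<Sum>j<Suc (r i). g (emb (w j))) = 0" for i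
    by (rule sum.neutral) (auto simp: g_def K_def)
  ultimately have "(\<lambda>i. 0::real) \<longlonglongrightarrow> integral\<^sup>L \<mu>R g" by simp
  then have ig: "integral\<^sup>L \<mu>R g = 0" using LIMSEQ_unique tendsto_const by blast
  have gint: "integrable \<mu>R g"
    by (rule R.integrable_const_bound[where B=1]) (use gb borel_measurable_continuous_onI[OF gc] in auto)
  have "AE t in \<mu>R. g t = 0"
    using integral_nonneg_eq_0_iff_AE[OF gint] ig infdist_nonneg by (auto simp: g_def)
  then have AEK: "AE t in \<mu>R. t \<in> K"
  proof (rule AE_mp, intro AE_I2 impI)
    fix t assume "g t = 0"
    then have "infdist t K = 0" unfolding g_def by (simp add: min_def split: if_splits)
    then have "t \<in> closure K" using in_closure_iff_infdist_zero[OF neK] by simp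
    then show "t \<in> K" using clK by simp
  qed
  have inj: "inj_on emb UNIV" using emb_inj by simp
  define inv where "inv = the_inv_into UNIV emb"
  have inv_emb: "inv (emb z) = z" for z unfolding inv_def by (rule the_inv_into_f_f[OF inj]) simp
  have invc: "continuous_on K inv"
    unfolding inv_def K_def by (rule continuous_on_inv_into[OF emb_cont compact_sigma inj])
  define \<psi> where "\<psi> t = (if t \<in> K then inv t else (\<lambda>_::nat. False))" for t
  have \<psi>m: "\<psi> \<in> borel_measurable borel"
    unfolding \<psi>_def by (rule borel_measurable_continuous_on_if) (use clK invc in auto)
  have \<psi>m': "\<psi> \<in> measurable \<mu>R borel" using \<psi>m measurable_cong_sets[of \<mu>R borel borel borel] by simp
  define M where "M = distr \<mu>R borel \<psi>"
  have psM: "prob_space M" unfolding M_def by (rule R.prob_space_distr) (use \<psi>m in simp)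
  have sM: "sets M = sets borel" by (simp add: M_def)
  have main: "(\<lambda>i. (\<Sum>j<Suc (r i). f (w j)) / real (Suc (r i))) \<longlonglongrightarrow> integral\<^sup>L M f"
    if fc: "continuous_on UNIV f" for f :: "sigma \<Rightarrow> real"
  proof -
    obtain B where B: "\<And>z. \<bar>f z\<bar> \<le> B" using cont_bounded[OF fc] by auto
    have B0: "0 \<le> B" using B[of undefined] by simp
    have fic: "continuous_on K (\<lambda>t. f (inv t))"
      by (rule continuous_on_compose2[OF fc invc]) auto
    obtain G where G: "continuous_on UNIV G" "\<And>t. t \<in> K \<Longrightarrow> G t = f (inv t)" "\<And>t. t \<in> UNIV \<Longrightarrow> norm (G t) \<le> B"
      using Tietze[OF fic _ B0, of UNIV] clK B by (auto simp: closedin_closed_eq)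
    have Gb: "\<bar>G t\<bar> \<le> B" for t using G(3)[of t] by simp
    have "integral\<^sup>L M f = integral\<^sup>L \<mu>R (\<lambda>t. f (\<psi> t))"
      unfolding M_def by (rule integral_distr[OF \<psi>m' borel_measurable_continuous_onI[OF fc]])
    also have "\<dots> = integral\<^sup>L \<mu>R G"
    proof (rule integral_cong_AE)
      show "(\<lambda>t. f (\<psi> t)) \<in> borel_measurable \<mu>R"
        using measurable_comp[OF \<psi>m borel_measurable_continuous_onI[OF fc]] by (simp add: comp_def)
      show "G \<in> borel_measurable \<mu>R" using borel_measurable_continuous_onI[OF G(1)] by simp
      show "AE t in \<mu>R. f (\<psi> t) = G t" using AEK by eventually_elim (simp add: \<psi>_def G(2))
    qed
    finally have eq: "integral\<^sup>L M f = integral\<^sup>L \<mu>R G" .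
    have "(\<lambda>i. (\<Sum>j<Suc (r i). G (emb (w j))) / real (Suc (r i))) \<longlonglongrightarrow> integral\<^sup>L \<mu>R G"
      by (rule conv[OF G(1) Gb])
    moreover have "G (emb z) = f z" for z using G(2)[of "emb z"] inv_emb by (simp add: K_def)
    ultimately show ?thesis using eq by simp
  qed
  show ?thesis using that[OF r psM sM main] .
qed


lemma sum_ind_bound:
  fixes f :: "nat \<Rightarrow> real"
  assumes "\<And>j. 0 \<le> f j" "\<And>j. f j \<le> 1" "\<And>j. N0 \<le> j \<Longrightarrow> f j = 0"
  shows "(\<Sum>j<n. f j) \<le> real N0"
proof -
  have "(\<Sum>j<n. f j) \<le> real (min n N0)"
  proof (induction n)
    case 0 then show ?case by simp
  next
    case (Suc n)
    show ?case
    proof (cases "n < N0")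
      case True
      then have "min (Suc n) N0 = Suc (min n N0)" by simp
      then show ?thesis using Suc assms(2)[of n] by simp
    next
      case False
      then have "f n = 0" using assms(3) by simp
      moreover have "min (Suc n) N0 = min n N0" using False by simp
      ultimately show ?thesis using Suc by simp
    qed
  qed
  also have "\<dots> \<le> real N0" by simp
  finally show ?thesis .
qed

context
  fixes H :: "sigma \<Rightarrow> real"
  assumes Hc: "continuous_on UNIV H" and sv: "summable_variation H"
begin

context
  fixes V :: "sigma \<Rightarrow> real"
  assumes Vc: "continuous_on UNIV V" and Vcal: "calibrated_subaction H V"
begin

lemma exists_minimizing:
  "\<exists>M. minimizing H M \<and> support M \<noteq> {} \<and>
     (\<forall>x\<in>support M. \<forall>p N. \<exists>j\<ge>N. agree p (chain H V y j) x)"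
proof -
  define w where "w j = chain H V y (Suc j)" for j
  have wsh: "shift (w (Suc j)) = w j" for j
    unfolding w_def by (rule chain_shift[OF Hc sv Vc Vcal])
  obtain r M where r: "strict_mono r" and ps: "prob_space M" and sM: "sets M = sets borel"
    and lim: "\<And>f. continuous_on UNIV f \<Longrightarrow>
       (\<lambda>i. (\<Sum>j<Suc (r i). f (w j)) / real (Suc (r i))) \<longlonglongrightarrow> integral\<^sup>L M f"
    using KB[of w] by blast
  interpret M: prob_space M by (rule ps)
  have fm: "finite_measure M" by (rule M.finite_measure_axioms)
  have spM: "space M = UNIV" using sets_eq_imp_space_eq[OF sM] by simp
  have q: "strict_mono (\<lambda>i. Suc (r i))" using r by (simp add: strict_mono_def)
  have lim0: "(\<lambda>i. a / real (Suc (r i))) \<longlonglongrightarrow> 0" for a :: real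
    using LIMSEQ_subseq_LIMSEQ[OF lim_const_over_n[of a] q] by (simp add: comp_def)
  have invf: "integral\<^sup>L M (\<lambda>z. f (shift z)) = integral\<^sup>L M f" if fc: "continuous_on UNIV f" for f :: "sigma \<Rightarrow> real"
  proof -
    have fsc: "continuous_on UNIV (\<lambda>z. f (shift z))"
      by (rule continuous_on_compose2[OF fc cont_shift]) auto
    obtain B where B: "\<And>z. \<bar>f z\<bar> \<le> B" using cont_bounded[OF fc] by auto
    have sumeq: "(\<Sum>j<Suc N. f (shift (w j))) - (\<Sum>j<Suc N. f (w j)) = f (shift (w 0)) - f (w N)" for N
    proof -
      have "(\<Sum>j<Suc N. f (shift (w j))) = f (shift (w 0)) + (\<Sum>j<N. f (shift (w (Suc j))))"
        by (rule sum.lessThan_Suc_shift)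
      also have "\<dots> = f (shift (w 0)) + (\<Sum>j<N. f (w j))" using wsh by simp
      finally show ?thesis by simp
    qed
    define d where "d i = (\<Sum>j<Suc (r i). f (shift (w j))) / real (Suc (r i)) - (\<Sum>j<Suc (r i). f (w j)) / real (Suc (r i))" for i
    have "d \<longlonglongrightarrow> integral\<^sup>L M (\<lambda>z. f (shift z)) - integral\<^sup>L M f"
      unfolding d_def by (intro tendsto_intros lim fc fsc)
    moreover have "d \<longlonglongrightarrow> 0"
    proof (rule Lim_null_comparison)
      show "(\<lambda>i. (2 * B) / real (Suc (r i))) \<longlonglongrightarrow> 0" by (rule lim0)
      have "norm (d i) \<le> (2 * B) / real (Suc (r i))" for i
      proof -
        have "d i = (f (shift (w 0)) - f (w (r i))) / real (Suc (r i))"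
          unfolding d_def using sumeq[of "r i"] by (simp add: diff_divide_distrib[symmetric])
        moreover have "\<bar>f (shift (w 0)) - f (w (r i))\<bar> \<le> 2 * B" using B[of "shift (w 0)"] B[of "w (r i)"] by linarith
        ultimately show ?thesis by (simp add: abs_divide divide_right_mono)
      qed
      then show "\<forall>\<^sub>F i in sequentially. norm (d i) \<le> (2 * B) / real (Suc (r i))" by simp
    qed
    ultimately show ?thesis using LIMSEQ_unique by fastforce
  qed
  have smb: "shift \<in> M \<rightarrow>\<^sub>M M" using borel_measurable_continuous_onI[OF cont_shift] measurable_cong_sets[OF sM sM] by simp
  have inv: "distr M M shift = M"
  proof (rule measure_eq_cyl)
    show "finite_measure (distr M M shift)" by (rule M.finite_measure_distr[OF smb])
    show "finite_measure M" by (rule fm)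
    show "sets (distr M M shift) = sets borel" using sM by simp
    show "sets M = sets borel" by (rule sM)
    fix p x
    have Cs: "cyl p x \<in> sets M" using cyl_open'[of p x] sM by simp
    have Ps: "shift -` cyl p x \<in> sets M" using measurable_sets[OF smb Cs] spM by simp
    have "emeasure (distr M M shift) (cyl p x) = emeasure M (shift -` cyl p x)"
      using emeasure_distr[OF smb Cs] spM by simp
    also have "\<dots> = ennreal (measure M (shift -` cyl p x))" by (rule M.emeasure_eq_measure)
    also have "measure M (shift -` cyl p x) = integral\<^sup>L M (\<lambda>z. indicator (cyl p x) (shift z))"
      using spM by (simp add: indicator_vimage[symmetric])
    also have "\<dots> = integral\<^sup>L M (indicator (cyl p x))" by (rule invf[OF ind_cyl_cont])
    also have "\<dots> = measure M (cyl p x)" using spM by simp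
    also have "ennreal (measure M (cyl p x)) = emeasure M (cyl p x)" by (rule M.emeasure_eq_measure[symmetric])
    finally show "emeasure (distr M M shift) (cyl p x) = emeasure M (cyl p x)" .
  qed
  have ip: "invariant_prob M" unfolding invariant_prob_def using ps sM smb inv by simp
  define RV where "RV z = V z + H z - Hbar H - V (shift z)" for z
  have Vsc: "continuous_on UNIV (\<lambda>z. V (shift z))"
    by (rule continuous_on_compose2[OF Vc cont_shift]) auto
  have RVc: "continuous_on UNIV RV" unfolding RV_def by (intro continuous_intros Vc Hc Vsc)
  have RVw: "RV (w j) = 0" for j
  proof -
    have "V (chain H V y j) + Hbar H = V (chain H V y (Suc j)) + H (chain H V y (Suc j))"
      using backpre(2)[OF Hc sv Vc Vcal, of "chain H V y j"] by (simp add: chain_Suc[OF Hc sv Vc Vcal])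
    then show ?thesis using chain_shift[OF Hc sv Vc Vcal, of y j] by (simp add: RV_def w_def)
  qed
  have "(\<lambda>i. (\<Sum>j<Suc (r i). RV (w j)) / real (Suc (r i))) \<longlonglongrightarrow> integral\<^sup>L M RV" by (rule lim[OF RVc])
  then have "integral\<^sup>L M RV = 0" using RVw LIMSEQ_unique[OF _ tendsto_const[of 0]] by simp
  moreover have "integral\<^sup>L M RV = integral\<^sup>L M V + integral\<^sup>L M H - Hbar H - integral\<^sup>L M (\<lambda>z. V (shift z))"
  proof -
    have "integrable M V" "integrable M H" "integrable M (\<lambda>z. V (shift z))"
      using integrable_cont[OF fm sM] Vc Hc Vsc by auto
    then show ?thesis unfolding RV_def using M.prob_space by simp
  qed
  ultimately have intH: "integral\<^sup>L M H = Hbar H" using invf[OF Vc] by simp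
  have mini: "minimizing H M" unfolding minimizing_def
    using ip intH Hbar_le[OF Hc sv] by simp
  have supne: "support M \<noteq> {}"
  proof
    assume e: "support M = {}"
    have "\<exists>U. open U \<and> x \<in> U \<and> emeasure M U = 0" for x
      using e by (auto simp: support_def not_less)
    then obtain U where U: "\<And>x. open (U x) \<and> x \<in> U x \<and> emeasure M (U x) = 0" by metis
    have cov: "UNIV \<subseteq> (\<Union>c\<in>UNIV. U c)" using U by blast
    have "\<exists>C. finite C \<and> UNIV \<subseteq> (\<Union>c\<in>C. U c)"
      apply (rule compactE_image[OF compact_sigma, where f=U and C=UNIV])
      using U apply blast
      apply (rule cov)
      apply blast
      done
    then obtain C where C: "finite C" "UNIV \<subseteq> (\<Union>c\<in>C. U c)" by blast
    have "emeasure M UNIV \<le> emeasure M (\<Union>c\<in>C. U c)"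
      by (rule emeasure_mono) (use C U sM in auto)
    also have "\<dots> \<le> (\<Sum>c\<in>C. emeasure M (U c))"
      by (rule emeasure_subadditive_finite[OF C(1)]) (use U sM in auto)
    also have "\<dots> = 0" using U by simp
    finally show False using M.emeasure_space_1 spM by simp
  qed
  have recur: "\<exists>j\<ge>N. agree p (chain H V y j) x" if xs: "x \<in> support M" for x p N
  proof (rule ccontr)
    assume "\<not> (\<exists>j\<ge>N. agree p (chain H V y j) x)"
    then have no: "\<And>j. N \<le> j \<Longrightarrow> \<not> agree p (w j) x" unfolding w_def by auto
    have xC: "x \<in> cyl p x" by (simp add: cyl_def)
    have "emeasure M (cyl p x) > 0" using xs cyl_open' xC by (auto simp: support_def)
    then have mpos: "measure M (cyl p x) > 0" using M.emeasure_eq_measure[of "cyl p x"] by simp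
    have li: "(\<lambda>i. (\<Sum>j<Suc (r i). indicator (cyl p x) (w j)) / real (Suc (r i))) \<longlonglongrightarrow> measure M (cyl p x)"
      using lim[OF ind_cyl_cont[of p x]] spM by simp
    have "measure M (cyl p x) \<le> 0"
    proof (rule tendsto_le_ev[OF li lim0[of "real N"]])
      have "(\<Sum>j<Suc (r i). indicator (cyl p x) (w j)) \<le> real N" for i
        by (rule sum_ind_bound) (auto simp: indicator_def cyl_def no)
      then show "\<forall>\<^sub>F i in sequentially. (\<Sum>j<Suc (r i). indicator (cyl p x) (w j)) / real (Suc (r i)) \<le> real N / real (Suc (r i))"
        by (intro always_eventually allI divide_right_mono) auto
    qed
    then show False using mpos by simp
  qed
  show ?thesis using mini supne recur by blast
qed

end

theorem main_theorem:
  shows "(\<forall>x \<in> Mather H. peierls H x \<in> classK H \<and> calibrated_subaction H (peierls H x)) \<and>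
         (\<forall>V. continuous_on UNIV V \<and> calibrated_subaction H V \<longrightarrow>
           V \<in> classK H \<and>
           (\<forall>y. (\<exists>x \<in> Mather H. V y = V x + peierls H x y) \<and>
                (\<forall>x \<in> Mather H. V y \<le> V x + peierls H x y)))"
proof -
  have P1: "\<forall>x \<in> Mather H. peierls H x \<in> classK H \<and> calibrated_subaction H (peierls H x)"
  proof
    fix x assume "x \<in> Mather H"
    then have g: "good H x" by (rule Mather_good[OF Hc sv])
    show "peierls H x \<in> classK H \<and> calibrated_subaction H (peierls H x)"
      using h_classK[OF Hc sv g] h_calibrated[OF Hc sv g] by simp
  qed
  have P2: "V \<in> classK H \<and>
           (\<forall>y. (\<exists>x \<in> Mather H. V y = V x + peierls H x y) \<and>
                (\<forall>x \<in> Mather H. V y \<le> V x + peierls H x y))"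
    if Vc: "continuous_on UNIV V" and Vcal: "calibrated_subaction H V" for V
  proof -
    have "(\<exists>x \<in> Mather H. V y = V x + peierls H x y) \<and> (\<forall>x \<in> Mather H. V y \<le> V x + peierls H x y)" for y
    proof
      show "\<forall>x\<in>Mather H. V y \<le> V x + peierls H x y"
        using V_le_h[OF Hc sv Vc Vcal Mather_good[OF Hc sv]] by blast
      obtain M where M: "minimizing H M" "support M \<noteq> {}"
        "\<forall>x\<in>support M. \<forall>p N. \<exists>j\<ge>N. agree p (chain H V y j) x"
        using exists_minimizing[OF Vc Vcal, of y] by blast
      obtain x where x: "x \<in> support M" using M(2) by blast
      have xM: "x \<in> Mather H" using M(1) x by (auto simp: Mather_def)
      have g: "good H x" by (rule Mather_good[OF Hc sv xM])
      have "V y \<le> V x + peierls H x y" by (rule V_le_h[OF Hc sv Vc Vcal g])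
      moreover have "V x + peierls H x y \<le> V y"
        by (rule h_le_V[OF Hc sv Vc Vcal g]) (use M(3) x in blast)
      ultimately show "\<exists>x\<in>Mather H. V y = V x + peierls H x y" using xM by force
    qed
    then show ?thesis using V_classK[OF Hc sv Vc Vcal] by blast
  qed
  show ?thesis using P1 P2 by blast
qed

end

theorem proposition2p5:
  fixes H :: "sigma \<Rightarrow> real"
  assumes "continuous_on UNIV H"
    and "summable_variation H"
  shows "(\<forall>x \<in> Mather H. peierls H x \<in> classK H \<and> calibrated_subaction H (peierls H x)) \<and>
         (\<forall>V. continuous_on UNIV V \<and> calibrated_subaction H V \<longrightarrow>
           V \<in> classK H \<and>
           (\<forall>y. (\<exists>x \<in> Mather H. V y = V x + peierls H x y) \<and>
                (\<forall>x \<in> Mather H. V y \<le> V x + peierls H x y)))"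
    using main_theorem[OF assms] .

end
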